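(* Let $A=\{a_{ij}: i\ne j,\ i,j\ge1\}$ with $a_{ij}\prec a_{kl}$ iff $j=k$. For $f:[n]\to[n]$, a word $w=w_1\cdots w_n$ over $A$ is $f$-compatible if $w_{f(j)}\prec w_j$ for every $j\in[n]$ with $f(j)\neq j$; let $\mathbf S^f(A)$ be the sum of all $f$-compatible words. Then: (i) the $\mathbf S^f$, $f$ ranging over all endofunctions of all $[n]$, $n\ge0$, are linearly independent; (ii) $\mathbf S^f\mathbf S^g=\mathbf S^{f\bullet g}$, so their span $\mathbf{EFSym}$ is a subalgebra of $\mathbb K\langle\langle A\rangle\rangle$; (iii) letting letters of $A$ commute with those of $B$, $$\mathbf S^f(A\oplus B)=\sum_{I\models f}\mathbf S^{\mathrm{std}(f^{[n]\setminus I})}(A)\,\mathbf S^{\mathrm{std}(f^I)}(B);$$ (iv) with the coproduct $\Delta\mathbf S^f=\sum_{I\models f}\mathbf S^{\mathrm{std}(f^{[n]\setminus I})}\otimes\mathbf S^{\mathrm{std}(f^I)}$ (i.e. $\Delta F=F(A\oplus B)$), $\mathbf{EFSym}$ is a graded (non-cocommutative) Hopf algebra.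
   Context: For $f:[n]\to[n]$ and $g:[m]\to[m]$, $f\bullet g:[n+m]\to[n+m]$ is the shifted concatenation: $(f\bullet g)(i)=f(i)$ for $i\le n$ and $(f\bullet g)(n+i)=g(i)+n$. For $I\subseteq[n]$, $f^I:I\to I$ is defined by $f^I(x)=f(x)$ if $f(x)\in I$ and $f^I(x)=x$ otherwise; if $|I|=k$ and $\tau_I:I\to[k]$ is the increasing bijection, $\mathrm{std}(f^I)=\tau_I\circ f^I\circ\tau_I^{-1}$. $I$ is an ideal of $f$, written $I\models f$, if $f^{-1}(I)\subseteq I$. $B=\{b_{ij}:i\neq j\}$ is a disjoint copy of $A$ with the same relation; $A\oplus B$ is the disjoint union with the relations on $A$ and on $B$ plus $a\prec b$ for all $a\in A,b\in B$ (never $b\prec a$); $\mathbf S^f(A\oplus B)$ is the sum of $f$-compatible words over $A\oplus B$. $\mathbf S^{\emptyset}=1$ for the empty function. *)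

theory Defs
  imports Main
begin

text \<open>An endofunction f of [n] = {1..n} is encoded as the list fs of length n with
  f(i) = fs ! (i - 1).  The empty list is the empty function.\<close>

definition is_endo :: "nat list \<Rightarrow> bool" where
  "is_endo fs \<longleftrightarrow> (\<forall>x\<in>set fs. 1 \<le> x \<and> x \<le> length fs)"

definition ap :: "nat list \<Rightarrow> nat \<Rightarrow> nat" where
  "ap fs i = fs ! (i - 1)"

definition shcat :: "nat list \<Rightarrow> nat list \<Rightarrow> nat list" where
  "shcat fs gs = fs @ map (\<lambda>x. x + length fs) gs"

definition restr :: "nat list \<Rightarrow> nat set \<Rightarrow> nat \<Rightarrow> nat" where
  "restr fs I x = (if ap fs x \<in> I then ap fs x else x)"

text \<open>std(f^I) = tau_I o f^I o tau_I^{-1}, where tau_I x = card {y \<in> I. y \<le> x} and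
  tau_I^{-1}(i) is the i-th smallest element of I.\<close>
definition stdr :: "nat list \<Rightarrow> nat set \<Rightarrow> nat list" where
  "stdr fs I = map (\<lambda>x. card {y\<in>I. y \<le> restr fs I x}) (sorted_list_of_set I)"

definition is_ideal :: "nat list \<Rightarrow> nat set \<Rightarrow> bool" where
  "is_ideal fs I \<longleftrightarrow> I \<subseteq> {1..length fs} \<and> (\<forall>j\<in>{1..length fs}. ap fs j \<in> I \<longrightarrow> j \<in> I)"

definition compat :: "('l \<Rightarrow> 'l \<Rightarrow> bool) \<Rightarrow> nat list \<Rightarrow> 'l list \<Rightarrow> bool" where
  "compat prec fs w \<longleftrightarrow> length w = length fs \<and>
     (\<forall>j\<in>{1..length fs}. ap fs j \<noteq> j \<longrightarrow> prec (w ! (ap fs j - 1)) (w ! (j - 1)))"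

text \<open>Sum of all f-compatible words over the alphabet {x. valid x}, as a formal series
  (function from words to coefficients).\<close>
definition Sgen :: "('l \<Rightarrow> bool) \<Rightarrow> ('l \<Rightarrow> 'l \<Rightarrow> bool) \<Rightarrow> nat list \<Rightarrow> 'l list \<Rightarrow> 'k::field" where
  "Sgen valid prec fs w = (if (\<forall>x\<in>set w. valid x) \<and> compat prec fs w then 1 else 0)"

type_synonym letter = "nat \<times> nat"

text \<open>A = {a_ij : i \<noteq> j, i,j \<ge> 1}, a_ij encoded as (i,j); a_ij \<prec> a_kl iff j = k.\<close>
definition validA :: "letter \<Rightarrow> bool" where
  "validA a \<longleftrightarrow> fst a \<noteq> snd a \<and> 1 \<le> fst a \<and> 1 \<le> snd a"

definition precA :: "letter \<Rightarrow> letter \<Rightarrow> bool" where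
  "precA a b \<longleftrightarrow> snd a = fst b"

text \<open>A \<oplus> B: Inl = letters of A, Inr = letters of the copy B.\<close>
fun validAB :: "letter + letter \<Rightarrow> bool" where
  "validAB (Inl a) = validA a"
| "validAB (Inr b) = validA b"

fun precAB :: "letter + letter \<Rightarrow> letter + letter \<Rightarrow> bool" where
  "precAB (Inl a) (Inl b) = precA a b"
| "precAB (Inr a) (Inr b) = precA a b"
| "precAB (Inl a) (Inr b) = True"
| "precAB (Inr a) (Inl b) = False"

abbreviation SA :: "nat list \<Rightarrow> letter list \<Rightarrow> 'k::field" where
  "SA \<equiv> Sgen validA precA"

abbreviation SAB :: "nat list \<Rightarrow> (letter + letter) list \<Rightarrow> 'k::field" where
  "SAB \<equiv> Sgen validAB precAB"

definition series_mult :: "('l list \<Rightarrow> 'k::field) \<Rightarrow> ('l list \<Rightarrow> 'k) \<Rightarrow> 'l list \<Rightarrow> 'k" where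
  "series_mult u v w = (\<Sum>k\<le>length w. u (take k w) * v (drop k w))"

definition series_one :: "'l list \<Rightarrow> 'k::field" where
  "series_one w = (if w = [] then 1 else 0)"

definition EFSym :: "(letter list \<Rightarrow> 'k::field) set" where
  "EFSym = {F. \<exists>c :: nat list \<Rightarrow> 'k. finite {f. c f \<noteq> 0} \<and> (\<forall>f. c f \<noteq> 0 \<longrightarrow> is_endo f) \<and>
              F = (\<lambda>w. \<Sum>f\<in>{f. c f \<noteq> 0}. c f * SA f w)}"

text \<open>Vectors of the free vector space with basis 'b are finitely supported functions
  'b \<Rightarrow> 'k; linear maps are given by matrices M :: 'a \<Rightarrow> ('b \<Rightarrow> 'k) (image of each basis
  vector); the tensor product of free spaces has basis 'a \<times> 'b.\<close>

definition supp :: "('a \<Rightarrow> 'k::zero) \<Rightarrow> 'a set" where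
  "supp v = {x. v x \<noteq> 0}"

definition bvec :: "'a \<Rightarrow> 'a \<Rightarrow> 'k::{zero,one}" where
  "bvec x = (\<lambda>y. if y = x then 1 else 0)"

definition lext :: "('a \<Rightarrow> 'b \<Rightarrow> 'k::field) \<Rightarrow> ('a \<Rightarrow> 'k) \<Rightarrow> 'b \<Rightarrow> 'k" where
  "lext M v = (\<lambda>y. \<Sum>x\<in>supp v. v x * M x y)"

definition lfun :: "('a \<Rightarrow> 'k::field) \<Rightarrow> ('a \<Rightarrow> 'k) \<Rightarrow> 'k" where
  "lfun phi v = (\<Sum>x\<in>supp v. v x * phi x)"

definition tens :: "('a \<Rightarrow> 'k::field) \<Rightarrow> ('b \<Rightarrow> 'k) \<Rightarrow> 'a \<times> 'b \<Rightarrow> 'k" where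
  "tens u v = (\<lambda>(x, y). u x * v y)"

definition tmat :: "('a \<Rightarrow> 'c \<Rightarrow> 'k::field) \<Rightarrow> ('b \<Rightarrow> 'd \<Rightarrow> 'k) \<Rightarrow> 'a \<times> 'b \<Rightarrow> 'c \<times> 'd \<Rightarrow> 'k" where
  "tmat M N = (\<lambda>(a, b). tens (M a) (N b))"

text \<open>Hopf algebra axioms (on basis elements; the maps are the linear extensions):
  product mu, unit one, coproduct Delta, counit eps, antipode S.\<close>
definition hopf_sc :: "('b \<times> 'b \<Rightarrow> 'b \<Rightarrow> 'k::field) \<Rightarrow> ('b \<Rightarrow> 'k) \<Rightarrow> ('b \<Rightarrow> 'b \<times> 'b \<Rightarrow> 'k)
    \<Rightarrow> ('b \<Rightarrow> 'k) \<Rightarrow> ('b \<Rightarrow> 'b \<Rightarrow> 'k) \<Rightarrow> bool" where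
  "hopf_sc mu one Delta eps S \<longleftrightarrow>
     (\<forall>p. finite (supp (mu p))) \<and> finite (supp one) \<and> (\<forall>x. finite (supp (Delta x))) \<and>
     (\<forall>x. finite (supp (S x))) \<and>
     \<comment> \<open>associativity and unit\<close>
     (\<forall>x y z. lext mu (tens (mu (x, y)) (bvec z)) = lext mu (tens (bvec x) (mu (y, z)))) \<and>
     (\<forall>x. lext mu (tens one (bvec x)) = bvec x \<and> lext mu (tens (bvec x) one) = bvec x) \<and>
     \<comment> \<open>coassociativity and counit\<close>
     (\<forall>x. lext (tmat Delta bvec) (Delta x) =
            (\<lambda>((a, b), c). lext (tmat bvec Delta) (Delta x) (a, (b, c)))) \<and>
     (\<forall>x. lext (\<lambda>(a, b). (\<lambda>y. eps a * bvec b y)) (Delta x) = bvec x \<and>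
          lext (\<lambda>(a, b). (\<lambda>y. bvec a y * eps b)) (Delta x) = bvec x) \<and>
     \<comment> \<open>Delta and eps are algebra morphisms\<close>
     (\<forall>x y. lext Delta (mu (x, y)) =
            lext (\<lambda>((a1, a2), (b1, b2)). tens (mu (a1, b1)) (mu (a2, b2))) (tens (Delta x) (Delta y))) \<and>
     lext Delta one = tens one one \<and>
     (\<forall>x y. lfun eps (mu (x, y)) = eps x * eps y) \<and> lfun eps one = 1 \<and>
     \<comment> \<open>antipode\<close>
     (\<forall>x. lext mu (lext (tmat S bvec) (Delta x)) = (\<lambda>y. eps x * one y) \<and>
          lext mu (lext (tmat bvec S) (Delta x)) = (\<lambda>y. eps x * one y))"

definition graded_sc :: "('b \<Rightarrow> nat) \<Rightarrow> ('b \<times> 'b \<Rightarrow> 'b \<Rightarrow> 'k::field) \<Rightarrow> ('b \<Rightarrow> 'k)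
    \<Rightarrow> ('b \<Rightarrow> 'b \<times> 'b \<Rightarrow> 'k) \<Rightarrow> ('b \<Rightarrow> 'k) \<Rightarrow> bool" where
  "graded_sc deg mu one Delta eps \<longleftrightarrow>
     (\<forall>x y. supp (mu (x, y)) \<subseteq> {z. deg z = deg x + deg y}) \<and>
     supp one \<subseteq> {z. deg z = 0} \<and>
     (\<forall>x. supp (Delta x) \<subseteq> {(a, b). deg a + deg b = deg x}) \<and>
     (\<forall>x. eps x \<noteq> 0 \<longrightarrow> deg x = 0)"

typedef endo = "{fs. is_endo fs}" morphisms rep_endo abs_endo
  by (rule exI[of _ "[]"]) (simp add: is_endo_def)

definition efmu :: "endo \<times> endo \<Rightarrow> endo \<Rightarrow> 'k::field" where
  "efmu = (\<lambda>(f, g). bvec (abs_endo (shcat (rep_endo f) (rep_endo g))))"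

definition efone :: "endo \<Rightarrow> 'k::field" where
  "efone = bvec (abs_endo [])"

definition efDelta :: "endo \<Rightarrow> endo \<times> endo \<Rightarrow> 'k::field" where
  "efDelta f = (\<lambda>(g, h). of_nat (card {I. is_ideal (rep_endo f) I \<and>
       stdr (rep_endo f) ({1..length (rep_endo f)} - I) = rep_endo g \<and>
       stdr (rep_endo f) I = rep_endo h}))"

definition efdeg :: "endo \<Rightarrow> nat" where
  "efdeg f = length (rep_endo f)"

end

theory Submission
  imports Defs
begin


definition rank :: "nat set \<Rightarrow> nat \<Rightarrow> nat" where
  "rank X x = card {y\<in>X. y \<le> x}"

definition en :: "nat set \<Rightarrow> nat \<Rightarrow> nat" where
  "en X i = sorted_list_of_set X ! (i - 1)"

definition sm :: "nat \<Rightarrow> (nat \<Rightarrow> nat) \<Rightarrow> bool" where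
  "sm k e \<longleftrightarrow> (\<forall>i j. 1 \<le> i \<longrightarrow> i < j \<longrightarrow> j \<le> k \<longrightarrow> e i < e j)"

lemma smD: "sm k e \<Longrightarrow> i \<in> {1..k} \<Longrightarrow> j \<in> {1..k} \<Longrightarrow> i < j \<Longrightarrow> e i < e j"
  by (auto simp: sm_def)

lemma sm_le_iff: "sm k e \<Longrightarrow> i \<in> {1..k} \<Longrightarrow> j \<in> {1..k} \<Longrightarrow> e i \<le> e j \<longleftrightarrow> i \<le> j"
  by (metis linorder_not_le nat_less_le smD)

lemma sm_eq_iff: "sm k e \<Longrightarrow> i \<in> {1..k} \<Longrightarrow> j \<in> {1..k} \<Longrightarrow> e i = e j \<longleftrightarrow> i = j"
  by (metis le_antisym order_refl sm_le_iff)

lemma sm_inj: "sm k e \<Longrightarrow> inj_on e {1..k}"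
  by (meson inj_onI sm_eq_iff)

lemma one_k_shift: "{1..k} = Suc ` {0..<(k::nat)}"
  by (simp add: image_Suc_atLeastLessThan atLeastLessThanSuc_atLeastAtMost)

lemma img_shift: "g ` {1..k} = (\<lambda>i. g (Suc i)) ` {0..<k}"
proof -
  have "g ` {1..k} = g ` (Suc ` {0..<k})" by (metis one_k_shift)
  also have "\<dots> = (\<lambda>i. g (Suc i)) ` {0..<k}" by (rule image_image)
  finally show ?thesis .
qed

lemma restr_in: "x \<in> X \<Longrightarrow> restr f X x \<in> X"
  by (simp add: restr_def)

lemma rank_enum:
  assumes s: "sm k e" and im: "e ` {1..k} = X" and i: "i \<in> {1..k}"
  shows "rank X (e i) = i"
proof -
  have "{y\<in>X. y \<le> e i} = e ` {1..i}"
  proof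
    show "{y \<in> X. y \<le> e i} \<subseteq> e ` {1..i}"
    proof
      fix y assume "y \<in> {y \<in> X. y \<le> e i}"
      then obtain j where j: "j \<in> {1..k}" "y = e j" "e j \<le> e i" using im by auto
      have "j \<le> i" using sm_le_iff[OF s j(1) i] j(3) by simp
      then show "y \<in> e ` {1..i}" using j by auto
    qed
  next
    show "e ` {1..i} \<subseteq> {y \<in> X. y \<le> e i}"
    proof
      fix y assume "y \<in> e ` {1..i}"
      then obtain j where j: "j \<in> {1..i}" "y = e j" by auto
      have jk: "j \<in> {1..k}" using j i by auto
      moreover have "e j \<le> e i" using sm_le_iff[OF s jk i] j by simp
      ultimately show "y \<in> {y \<in> X. y \<le> e i}" using j im by auto
    qed
  qed
  moreover have "inj_on e {1..i}"
    using sm_inj[OF s] i by (auto intro: inj_on_subset)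
  ultimately show ?thesis unfolding rank_def by (simp add: card_image)
qed

lemma card_enum:
  assumes s: "sm k e" and im: "e ` {1..k} = X"
  shows "card X = k"
  using card_image[OF sm_inj[OF s]] im by simp

lemma sorted_enum:
  assumes s: "sm k e" and im: "e ` {1..k} = X"
  shows "sorted_list_of_set X = map (\<lambda>i. e (Suc i)) [0..<k]"
proof -
  have fin: "finite X" using im by auto
  have "sorted_wrt (<) (map (\<lambda>i. e (Suc i)) [0..<k])"
    unfolding sorted_wrt_iff_nth_less
    using s by (auto simp: sm_def)
  moreover have "set (map (\<lambda>i. e (Suc i)) [0..<k]) = X" 
    using im img_shift[of e k] by simp
  moreover have "length (map (\<lambda>i. e (Suc i)) [0..<k]) = card X" using card_enum[OF s im] by simp
  ultimately show ?thesis using sorted_list_of_set_unique[OF fin] by blast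
qed

lemma en_props:
  assumes fin: "finite X"
  shows "sm (card X) (en X)" "en X ` {1..card X} = X"
proof -
  let ?s = "sorted_list_of_set X"
  have ss: "sorted_wrt (<) ?s" by simp
  have len: "length ?s = card X" using fin by simp
  show "sm (card X) (en X)"
    unfolding sm_def en_def
  proof (intro allI impI)
    fix r s assume r: "1 \<le> r" and s: "s \<le> card X" and rs: "r < s"
    show "?s ! (r - 1) < ?s ! (s - 1)"
      using ss r s rs len by (auto simp: sorted_wrt_iff_nth_less)
  qed
  have "en X ` {1..card X} = (\<lambda>i. ?s ! i) ` {0..<card X}"
    using img_shift[of "en X" "card X"] by (simp add: en_def)
  also have "\<dots> = set ?s" using len by (auto simp: set_conv_nth)
  also have "\<dots> = X" using fin by simp
  finally show "en X ` {1..card X} = X" .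
qed

lemma ap_map_upt: "i \<in> {1..k} \<Longrightarrow> ap (map g [0..<k]) i = g (i - 1)"
  by (auto simp: ap_def)

lemma stdr_enum:
  assumes s: "sm k e" and im: "e ` {1..k} = X"
  shows "stdr f X = map (\<lambda>i. rank X (restr f X (e (Suc i)))) [0..<k]"
  unfolding stdr_def sorted_enum[OF s im] rank_def by simp

lemma std_char:
  assumes s: "sm k e" and im: "e ` {1..k} = X"
    and len: "length L = k"
    and h: "\<forall>i\<in>{1..k}. ap L i \<in> {1..k} \<and> e (ap L i) = restr f X (e i)"
  shows "stdr f X = L"
proof (rule nth_equalityI)
  show "length (stdr f X) = length L" using stdr_enum[OF s im] len by simp
next
  fix i assume "i < length (stdr f X)"
  then have i: "Suc i \<in> {1..k}" using stdr_enum[OF s im] by simp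
  have "stdr f X ! i = rank X (restr f X (e (Suc i)))"
    using stdr_enum[OF s im] i by simp
  also have "\<dots> = rank X (e (ap L (Suc i)))" using h i by metis
  also have "\<dots> = ap L (Suc i)" 
  proof -
    have a: "ap L (Suc i) \<in> {1..k}" using h i by blast
    show ?thesis by (rule rank_enum[OF s im a])
  qed
  also have "\<dots> = L ! i" by (simp add: ap_def)
  finally show "stdr f X ! i = L ! i" .
qed

lemma std_props:
  assumes s: "sm k e" and im: "e ` {1..k} = X"
  shows "length (stdr f X) = k"
    "\<And>i. i\<in>{1..k} \<Longrightarrow> ap (stdr f X) i \<in> {1..k} \<and> e (ap (stdr f X) i) = restr f X (e i)"
proof -
  show "length (stdr f X) = k" using stdr_enum[OF s im] by simp
  fix i assume i: "i \<in> {1..k}"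
  have "restr f X (e i) \<in> X" using restr_in i im by auto
  then obtain j where j: "j \<in> {1..k}" "restr f X (e i) = e j" using im by auto
  have "ap (stdr f X) i = rank X (restr f X (e i))"
    using stdr_enum[OF s im] i by (auto simp: ap_def)
  also have "\<dots> = j" using j rank_enum[OF s im] by simp
  finally show "ap (stdr f X) i \<in> {1..k} \<and> e (ap (stdr f X) i) = restr f X (e i)"
    using j by simp
qed

lemma std_props_en:
  assumes "finite X"
  shows "length (stdr f X) = card X"
    "\<And>i. i\<in>{1..card X} \<Longrightarrow> ap (stdr f X) i \<in> {1..card X} \<and> en X (ap (stdr f X) i) = restr f X (en X i)"
  using std_props[OF en_props[OF assms]] by auto

lemma is_endo_ap: "is_endo L \<longleftrightarrow> (\<forall>i\<in>{1..length L}. ap L i \<in> {1..length L})"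
proof -
  have "set L = (\<lambda>i. ap L i) ` {1..length L}"
    using img_shift[of "ap L" "length L"] by (auto simp: ap_def set_conv_nth image_def)
  then show ?thesis unfolding is_endo_def by auto
qed

lemma endo_stdr: "finite X \<Longrightarrow> is_endo (stdr f X)"
  using std_props_en(1)[of X f] std_props_en(2)[of X _ f] by (simp add: is_endo_ap)

lemma length_stdr: "finite X \<Longrightarrow> length (stdr f X) = card X"
  using std_props_en by blast

lemma stdr_empty: "stdr f {} = []"
  by (simp add: stdr_def)

lemma sm_id: "sm k id" by (simp add: sm_def)

lemma stdr_full:
  assumes "is_endo f"
  shows "stdr f {1..length f} = f"
proof (rule std_char[of "length f" id])
  show "sm (length f) id" by (rule sm_id)
  show "id ` {1..length f} = {1..length f}" by simp
  show "length f = length f" ..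
  show "\<forall>i\<in>{1..length f}. ap f i \<in> {1..length f} \<and> id (ap f i) = restr f {1..length f} (id i)"
    using assms by (auto simp: is_endo_ap restr_def)
qed


lemma en_inj_iff:
  assumes "finite X" "i \<in> {1..card X}" "j \<in> {1..card X}"
  shows "en X i = en X j \<longleftrightarrow> i = j"
  using sm_eq_iff[OF en_props(1)[OF assms(1)]] assms by blast

lemma en_in: "finite X \<Longrightarrow> i \<in> {1..card X} \<Longrightarrow> en X i \<in> X"
  using en_props(2) by blast

lemma en_img_mem:
  assumes "finite X" "J \<subseteq> {1..card X}" "i \<in> {1..card X}"
  shows "en X i \<in> en X ` J \<longleftrightarrow> i \<in> J"
  using assms en_inj_iff[OF assms(1)] by blast

lemma stdr_nested:
  assumes fin: "finite X" and J: "J \<subseteq> {1..card X}"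
  shows "stdr (stdr f X) J = stdr f (en X ` J)"
proof -
  let ?g = "stdr f X"
  have finJ: "finite J" using J finite_subset by blast
  have enJ: "\<And>i. i \<in> {1..card J} \<Longrightarrow> en J i \<in> J" using en_in[OF finJ] by blast
  have s: "sm (card J) (\<lambda>i. en X (en J i))"
    unfolding sm_def
  proof (intro allI impI)
    fix i j assume "1 \<le> i" "i < j" "j \<le> card J"
    then have "en J i < en J j" "en J i \<in> {1..card X}" "en J j \<in> {1..card X}"
      using smD[OF en_props(1)[OF finJ], of i j] enJ[of i] enJ[of j] J by auto
    then show "en X (en J i) < en X (en J j)" using smD[OF en_props(1)[OF fin]] by blast
  qed
  have im: "(\<lambda>i. en X (en J i)) ` {1..card J} = en X ` J"
    using en_props(2)[OF finJ] by (metis image_image)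
  have "stdr f (en X ` J) = stdr ?g J"
  proof (rule std_char[OF s im])
    show "length (stdr ?g J) = card J" using length_stdr[OF finJ] .
    show "\<forall>i\<in>{1..card J}. ap (stdr ?g J) i \<in> {1..card J} \<and>
        en X (en J (ap (stdr ?g J) i)) = restr f (en X ` J) (en X (en J i))"
    proof
      fix i assume i: "i \<in> {1..card J}"
      have p1: "ap (stdr ?g J) i \<in> {1..card J}" "en J (ap (stdr ?g J) i) = restr ?g J (en J i)"
        using std_props_en(2)[OF finJ i] by auto
      define k where "k = en J i"
      have kJ: "k \<in> J" using enJ[OF i] k_def by simp
      have kX: "k \<in> {1..card X}" using kJ J by auto
      have p2: "ap ?g k \<in> {1..card X}" "en X (ap ?g k) = restr f X (en X k)"
        using std_props_en(2)[OF fin kX] by auto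
      define x where "x = en X k"
      have xX: "x \<in> X" using en_in[OF fin kX] x_def by simp
      have EJX: "en X ` J \<subseteq> X" using J en_props(2)[OF fin] by auto
      have "en X (restr ?g J k) = restr f (en X ` J) x"
      proof (cases "ap ?g k \<in> J")
        case True
        then have l: "en X (restr ?g J k) = restr f X x" using p2 x_def by (simp add: restr_def)
        have rin: "restr f X x \<in> en X ` J" using p2 True x_def by (metis image_eqI)
        show ?thesis
        proof (cases "ap f x \<in> X")
          case True
          then show ?thesis using l rin by (simp add: restr_def)
        next
          case False
          then have "ap f x \<notin> en X ` J" using EJX by auto
          then show ?thesis using l False by (simp add: restr_def)
        qed
      next
        case False
        then have l: "en X (restr ?g J k) = x" using x_def by (simp add: restr_def)
        have "ap f x \<notin> en X ` J"
        proof
          assume a: "ap f x \<in> en X ` J"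
          then obtain j where j: "j \<in> J" "ap f x = en X j" by auto
          have "ap f x \<in> X" using a EJX by auto
          then have "restr f X x = ap f x" by (simp add: restr_def)
          then have "en X (ap ?g k) = en X j" using p2 j x_def by simp
          moreover have "j \<in> {1..card X}" using j J by auto
          ultimately have "ap ?g k = j" using en_inj_iff[OF fin p2(1)] by blast
          then show False using False j by simp
        qed
        then show ?thesis using l by (simp add: restr_def)
      qed
      then show "ap (stdr ?g J) i \<in> {1..card J} \<and>
        en X (en J (ap (stdr ?g J) i)) = restr f (en X ` J) (en X (en J i))"
        using p1 k_def x_def by simp
    qed
  qed
  then show ?thesis by simp
qed

lemma ap_shcat:
  assumes "1 \<le> i" "i \<le> length F + length G"
  shows "ap (shcat F G) i = (if i \<le> length F then ap F i else ap G (i - length F) + length F)"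
  using assms by (auto simp: ap_def shcat_def nth_append)

lemma length_shcat[simp]: "length (shcat F G) = length F + length G"
  by (simp add: shcat_def)

lemma stdr_shcat:
  assumes ef: "is_endo f" and eg: "is_endo g"
    and X: "X \<subseteq> {1..length f}" and Y: "Y \<subseteq> {1..length g}"
  shows "stdr (shcat f g) (X \<union> (\<lambda>y. y + length f) ` Y) = shcat (stdr f X) (stdr g Y)"
proof -
  let ?n = "length f"
  have finX: "finite X" using X finite_subset by blast
  have finY: "finite Y" using Y finite_subset by blast
  let ?a = "card X" and ?b = "card Y"
  define E where "E i = (if i \<le> ?a then en X i else en Y (i - ?a) + ?n)" for i
  have eX: "\<And>i. i \<in> {1..?a} \<Longrightarrow> en X i \<in> {1..?n}" using en_in[OF finX] X by blast
  have eY: "\<And>i. i \<in> {1..?b} \<Longrightarrow> en Y i \<in> {1..length g}" using en_in[OF finY] Y by blast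
  have s: "sm (?a + ?b) E"
    unfolding sm_def
  proof (intro allI impI)
    fix i j assume ij: "1 \<le> i" "i < j" "j \<le> ?a + ?b"
    show "E i < E j"
    proof (cases "j \<le> ?a")
      case True
      then show ?thesis using ij smD[OF en_props(1)[OF finX], of i j] E_def by auto
    next
      case False
      note jF = False
      show ?thesis
      proof (cases "i \<le> ?a")
        case True
        then have "E i \<le> ?n" using eX[of i] ij E_def by auto
        moreover have "E j > ?n"
        proof -
          have "j - ?a \<in> {1..?b}" using jF ij by auto
          then show ?thesis using eY[of "j - ?a"] jF E_def by force
        qed
        ultimately show ?thesis by simp
      next
        case False
        have r: "i - ?a \<in> {1..?b}" "j - ?a \<in> {1..?b}" "i - ?a < j - ?a" using False jF ij by auto
        have "en Y (i - ?a) < en Y (j - ?a)" using smD[OF en_props(1)[OF finY] r] .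
        then show ?thesis using jF False by (simp add: E_def)
      qed
    qed
  qed
  have im: "E ` {1..?a + ?b} = X \<union> (\<lambda>y. y + ?n) ` Y"
  proof -
    have "{1..?a + ?b} = {1..?a} \<union> (\<lambda>i. i + ?a) ` {1..?b}"
    proof
      show "{1..?a + ?b} \<subseteq> {1..?a} \<union> (\<lambda>i. i + ?a) ` {1..?b}"
      proof
        fix i assume i: "i \<in> {1..?a + ?b}"
        show "i \<in> {1..?a} \<union> (\<lambda>i. i + ?a) ` {1..?b}"
        proof (cases "i \<le> ?a")
          case True then show ?thesis using i by simp
        next
          case False
          then have "i = (i - ?a) + ?a" "i - ?a \<in> {1..?b}" using i by auto
          then show ?thesis by blast
        qed
      qed
    qed auto
    then have "E ` {1..?a + ?b} = E ` ({1..?a} \<union> (\<lambda>i. i + ?a) ` {1..?b})"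
      by (simp only:)
    also have "\<dots> = E ` {1..?a} \<union> (\<lambda>i. E (i + ?a)) ` {1..?b}"
      by (simp only: image_Un image_image)
    also have "E ` {1..?a} = en X ` {1..?a}" by (rule image_cong) (auto simp: E_def)
    also have "(\<lambda>i. E (i + ?a)) ` {1..?b} = (\<lambda>i. en Y i + ?n) ` {1..?b}"
      by (rule image_cong) (auto simp: E_def)
    also have "\<dots> = (\<lambda>y. y + ?n) ` (en Y ` {1..?b})" by (simp only: image_image)
    finally show ?thesis using en_props(2)[OF finX] en_props(2)[OF finY] by simp
  qed
  show ?thesis
  proof (rule std_char[OF s im])
    show "length (shcat (stdr f X) (stdr g Y)) = ?a + ?b"
      using length_stdr[OF finX] length_stdr[OF finY] by simp
    show "\<forall>i\<in>{1..?a + ?b}. ap (shcat (stdr f X) (stdr g Y)) i \<in> {1..?a + ?b} \<and>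
       E (ap (shcat (stdr f X) (stdr g Y)) i) = restr (shcat f g) (X \<union> (\<lambda>y. y + ?n) ` Y) (E i)"
    proof
      fix i assume i: "i \<in> {1..?a + ?b}"
      have lens: "length (stdr f X) = ?a" "length (stdr g Y) = ?b"
        using length_stdr[OF finX] length_stdr[OF finY] by auto
      show "ap (shcat (stdr f X) (stdr g Y)) i \<in> {1..?a + ?b} \<and>
       E (ap (shcat (stdr f X) (stdr g Y)) i) = restr (shcat f g) (X \<union> (\<lambda>y. y + ?n) ` Y) (E i)"
      proof (cases "i \<le> ?a")
        case True
        then have i1: "i \<in> {1..?a}" using i by auto
        have ap1: "ap (shcat (stdr f X) (stdr g Y)) i = ap (stdr f X) i"
          using ap_shcat[of i "stdr f X" "stdr g Y"] i lens True by auto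
        have p: "ap (stdr f X) i \<in> {1..?a}" "en X (ap (stdr f X) i) = restr f X (en X i)"
          using std_props_en(2)[OF finX i1] by auto
        define x where "x = en X i"
        have x: "x \<in> {1..?n}" using eX[OF i1] x_def by simp
        have apx: "ap (shcat f g) x = ap f x"
          using ap_shcat[of x f g] x by auto
        have afx: "ap f x \<in> {1..?n}" using ef x by (simp add: is_endo_ap)
        have "ap f x \<in> X \<union> (\<lambda>y. y + ?n) ` Y \<longleftrightarrow> ap f x \<in> X" using afx Y by auto
        then have "restr (shcat f g) (X \<union> (\<lambda>y. y + ?n) ` Y) x = restr f X x"
          using apx by (simp add: restr_def)
        then show ?thesis using ap1 p True x_def E_def by auto
      next
        case False
        define j where "j = i - ?a"
        have j: "j \<in> {1..?b}" using i False j_def by auto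
        have ap1: "ap (shcat (stdr f X) (stdr g Y)) i = ap (stdr g Y) j + ?a"
          using ap_shcat[of i "stdr f X" "stdr g Y"] i lens False j_def by auto
        have p: "ap (stdr g Y) j \<in> {1..?b}" "en Y (ap (stdr g Y) j) = restr g Y (en Y j)"
          using std_props_en(2)[OF finY j] by auto
        define y where "y = en Y j"
        have y: "y \<in> {1..length g}" using eY[OF j] y_def by simp
        have apx: "ap (shcat f g) (y + ?n) = ap g y + ?n"
          using ap_shcat[of "y + ?n" f g] y by auto
        have agy: "ap g y \<in> {1..length g}" using eg y by (simp add: is_endo_ap)
        have iff: "ap g y + ?n \<in> X \<union> (\<lambda>y. y + ?n) ` Y \<longleftrightarrow> ap g y \<in> Y" using X agy by auto
        have r1: "restr (shcat f g) (X \<union> (\<lambda>y. y + ?n) ` Y) (y + ?n) = restr g Y y + ?n"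
        proof (cases "ap g y \<in> Y")
          case True
          then have m: "ap g y + ?n \<in> X \<union> (\<lambda>y. y + ?n) ` Y" using iff by blast
          show ?thesis unfolding restr_def apx by (simp only: if_P[OF m] if_P[OF True])
        next
          case False
          then have m: "ap g y + ?n \<notin> X \<union> (\<lambda>y. y + ?n) ` Y" using iff by blast
          show ?thesis unfolding restr_def apx by (simp only: if_not_P[OF m] if_not_P[OF False])
        qed
        have e0: "E i = en Y (i - ?a) + ?n" using False by (simp add: E_def)
        have e1: "E i = y + ?n" using e0 j_def y_def by simp
        have e2: "E (ap (stdr g Y) j + ?a) = en Y (ap (stdr g Y) j) + ?n"
          using p(1) by (simp add: E_def)
        have "ap (shcat (stdr f X) (stdr g Y)) i \<in> {1..?a + ?b}" using ap1 p(1) by auto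
        moreover have "E (ap (shcat (stdr f X) (stdr g Y)) i) = restr (shcat f g) (X \<union> (\<lambda>y. y + ?n) ` Y) (E i)"
        proof -
          have "E (ap (shcat (stdr f X) (stdr g Y)) i) = en Y (ap (stdr g Y) j) + ?n" using ap1 e2 by simp
          also have "\<dots> = restr g Y y + ?n" using p(2) y_def by simp
          also have "\<dots> = restr (shcat f g) (X \<union> (\<lambda>y. y + ?n) ` Y) (E i)" using r1 e1 by simp
          finally show ?thesis .
        qed
        ultimately show ?thesis by blast
      qed
    qed
  qed
qed

lemma ideal_stdr_iff:
  assumes fin: "finite X" and J: "J \<subseteq> {1..card X}"
  shows "is_ideal (stdr f X) J \<longleftrightarrow> (\<forall>x\<in>X. restr f X x \<in> en X ` J \<longrightarrow> x \<in> en X ` J)"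
proof -
  have len: "length (stdr f X) = card X" using length_stdr[OF fin] .
  have "is_ideal (stdr f X) J \<longleftrightarrow> (\<forall>j\<in>{1..card X}. ap (stdr f X) j \<in> J \<longrightarrow> j \<in> J)"
    using J len by (simp add: is_ideal_def)
  also have "\<dots> \<longleftrightarrow> (\<forall>j\<in>{1..card X}. restr f X (en X j) \<in> en X ` J \<longrightarrow> en X j \<in> en X ` J)"
  proof -
    have "\<And>j. j\<in>{1..card X} \<Longrightarrow> (ap (stdr f X) j \<in> J) = (restr f X (en X j) \<in> en X ` J)"
    proof -
      fix j assume j: "j\<in>{1..card X}"
      have p: "ap (stdr f X) j \<in> {1..card X}" "en X (ap (stdr f X) j) = restr f X (en X j)"
        using std_props_en(2)[OF fin j] by auto
      show "(ap (stdr f X) j \<in> J) = (restr f X (en X j) \<in> en X ` J)"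
        using en_img_mem[OF fin J p(1)] p(2) by simp
    qed
    moreover have "\<And>j. j\<in>{1..card X} \<Longrightarrow> (j \<in> J) = (en X j \<in> en X ` J)"
      using en_img_mem[OF fin J] by simp
    ultimately show ?thesis by auto
  qed
  also have "\<dots> \<longleftrightarrow> (\<forall>x\<in>en X ` {1..card X}. restr f X x \<in> en X ` J \<longrightarrow> x \<in> en X ` J)"
    by blast
  also have "\<dots> \<longleftrightarrow> (\<forall>x\<in>X. restr f X x \<in> en X ` J \<longrightarrow> x \<in> en X ` J)"
    using en_props(2)[OF fin] by simp
  finally show ?thesis .
qed


abbreviation NN :: "nat list \<Rightarrow> nat set" where "NN f \<equiv> {1..length f}"
abbreviation Id :: "nat list \<Rightarrow> nat set set" where "Id f \<equiv> {I. is_ideal f I}"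
abbreviation PP :: "nat list \<Rightarrow> nat set \<Rightarrow> nat list" where "PP f I \<equiv> stdr f (NN f - I)"
abbreviation QQ :: "nat list \<Rightarrow> nat set \<Rightarrow> nat list" where "QQ f I \<equiv> stdr f I"

lemma ideal_sub: "is_ideal f I \<Longrightarrow> I \<subseteq> NN f"
  by (simp add: is_ideal_def)

lemma finite_ideal: "is_ideal f I \<Longrightarrow> finite I"
  using ideal_sub finite_subset by blast

lemma finite_Id: "finite (Id f)"
proof -
  have "Id f \<subseteq> Pow (NN f)" using ideal_sub by blast
  then show ?thesis using finite_subset by blast
qed

lemma ideal_empty: "is_ideal f {}" by (simp add: is_ideal_def)
lemma ideal_full: "is_ideal f (NN f)" by (simp add: is_ideal_def)

lemma trans_left:
  assumes I: "is_ideal f I" and Y: "Y \<subseteq> NN f - I"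
  shows "(\<forall>x\<in>NN f - I. restr f (NN f - I) x \<in> Y \<longrightarrow> x \<in> Y) \<longleftrightarrow> is_ideal f (I \<union> Y)"
proof
  assume h: "\<forall>x\<in>NN f - I. restr f (NN f - I) x \<in> Y \<longrightarrow> x \<in> Y"
  show "is_ideal f (I \<union> Y)"
    unfolding is_ideal_def
  proof (intro conjI ballI impI)
    show "I \<union> Y \<subseteq> NN f" using ideal_sub[OF I] Y by auto
  next
    fix j assume j: "j \<in> NN f" and a: "ap f j \<in> I \<union> Y"
    show "j \<in> I \<union> Y"
    proof (cases "j \<in> I")
      case True then show ?thesis by simp
    next
      case False
      show ?thesis
      proof (cases "ap f j \<in> I")
        case True
        then have "j \<in> I" using I j by (simp add: is_ideal_def)
        then show ?thesis by simp
      next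
        case False2: False
        then have "ap f j \<in> Y" using a by simp
        then have "ap f j \<in> NN f - I" using Y by auto
        then have "restr f (NN f - I) j = ap f j" by (simp add: restr_def)
        then show ?thesis using h j False \<open>ap f j \<in> Y\<close> by auto
      qed
    qed
  qed
next
  assume h: "is_ideal f (I \<union> Y)"
  show "\<forall>x\<in>NN f - I. restr f (NN f - I) x \<in> Y \<longrightarrow> x \<in> Y"
  proof (intro ballI impI)
    fix x assume x: "x \<in> NN f - I" and r: "restr f (NN f - I) x \<in> Y"
    show "x \<in> Y"
    proof (cases "ap f x \<in> NN f - I")
      case True
      then have "ap f x \<in> Y" using r by (simp add: restr_def)
      then have "x \<in> I \<union> Y" using h x unfolding is_ideal_def by blast
      then show ?thesis using x by auto
    next
      case False
      have "restr f (NN f - I) x = x" unfolding restr_def using False by (rule if_not_P)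
      then show ?thesis using r by simp
    qed
  qed
qed

lemma trans_right:
  assumes I: "is_ideal f I" and Z: "Z \<subseteq> I"
  shows "(\<forall>x\<in>I. restr f I x \<in> Z \<longrightarrow> x \<in> Z) \<longleftrightarrow> is_ideal f Z"
proof
  assume h: "\<forall>x\<in>I. restr f I x \<in> Z \<longrightarrow> x \<in> Z"
  show "is_ideal f Z"
    unfolding is_ideal_def
  proof (intro conjI ballI impI)
    show "Z \<subseteq> NN f" using ideal_sub[OF I] Z by auto
  next
    fix j assume j: "j \<in> NN f" and a: "ap f j \<in> Z"
    then have jI: "j \<in> I" using I Z by (auto simp: is_ideal_def)
    have "restr f I j = ap f j" using a Z by (auto simp: restr_def)
    then show "j \<in> Z" using h jI a by auto
  qed
next
  assume h: "is_ideal f Z"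
  show "\<forall>x\<in>I. restr f I x \<in> Z \<longrightarrow> x \<in> Z"
  proof (intro ballI impI)
    fix x assume x: "x \<in> I" and r: "restr f I x \<in> Z"
    show "x \<in> Z"
    proof (cases "ap f x \<in> I")
      case True
      then have "ap f x \<in> Z" using r by (simp add: restr_def)
      moreover have "x \<in> NN f" using x ideal_sub[OF I] by auto
      ultimately show ?thesis using h by (simp add: is_ideal_def)
    next
      case False
      then show ?thesis using r by (simp add: restr_def)
    qed
  qed
qed

definition MM :: "nat list \<Rightarrow> (nat set \<times> nat set) set" where
  "MM f = {(Z, Y). is_ideal f Z \<and> is_ideal f (Z \<union> Y) \<and> Y \<inter> Z = {}}"

lemma finite_MM: "finite (MM f)"
proof -
  have "MM f \<subseteq> Pow (NN f) \<times> Pow (NN f)"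
    unfolding MM_def using ideal_sub by fastforce
  then show ?thesis using finite_subset by blast
qed

lemma en_sub_img:
  assumes fin: "finite X" and Y: "Y \<subseteq> X"
  shows "en X ` {j\<in>{1..card X}. en X j \<in> Y} = Y"
proof
  show "en X ` {j\<in>{1..card X}. en X j \<in> Y} \<subseteq> Y" by auto
  show "Y \<subseteq> en X ` {j\<in>{1..card X}. en X j \<in> Y}"
  proof
    fix x assume x: "x \<in> Y"
    then have "x \<in> en X ` {1..card X}" using en_props(2)[OF fin] Y by auto
    then obtain j where j: "j \<in> {1..card X}" "x = en X j" by auto
    then show "x \<in> en X ` {j\<in>{1..card X}. en X j \<in> Y}" using x by auto
  qed
qed

lemma en_img_inj:
  assumes fin: "finite X" and "J \<subseteq> {1..card X}" "J' \<subseteq> {1..card X}" "en X ` J = en X ` J'"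
  shows "J = J'"
  using inj_on_image_eq_iff[OF sm_inj[OF en_props(1)[OF fin]]] assms by blast

lemma en_img_diff:
  assumes fin: "finite X" and J: "J \<subseteq> {1..card X}"
  shows "en X ` ({1..card X} - J) = X - en X ` J"
proof -
  have "en X ` ({1..card X} - J) = en X ` {1..card X} - en X ` J"
    using inj_on_image_set_diff[OF sm_inj[OF en_props(1)[OF fin]]] J by blast
  then show ?thesis using en_props(2)[OF fin] by simp
qed

lemma en_img_sub: "finite X \<Longrightarrow> J \<subseteq> {1..card X} \<Longrightarrow> en X ` J \<subseteq> X"
  using en_props(2) by blast

lemma ideal_std_sub: "finite X \<Longrightarrow> is_ideal (stdr f X) J \<Longrightarrow> J \<subseteq> {1..card X}"
  using ideal_sub length_stdr by metis

lemma coassoc_left: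
  fixes F :: "nat list \<Rightarrow> nat list \<Rightarrow> nat list \<Rightarrow> 'a::comm_monoid_add"
  shows "(\<Sum>I\<in>Id f. \<Sum>J\<in>Id (PP f I). F (PP (PP f I) J) (QQ (PP f I) J) (QQ f I))
       = (\<Sum>p\<in>MM f. F (stdr f (NN f - (fst p \<union> snd p))) (stdr f (snd p)) (stdr f (fst p)))"
proof -
  let ?S = "Sigma (Id f) (\<lambda>I. Id (PP f I))"
  define \<phi> where "\<phi> p = (fst p, en (NN f - fst p) ` snd p)" for p :: "nat set \<times> nat set"
  have finS: "finite ?S" using finite_Id by (intro finite_SigmaI) auto
  have "(\<Sum>I\<in>Id f. \<Sum>J\<in>Id (PP f I). F (PP (PP f I) J) (QQ (PP f I) J) (QQ f I))
       = (\<Sum>p\<in>?S. F (PP (PP f (fst p)) (snd p)) (QQ (PP f (fst p)) (snd p)) (QQ f (fst p)))"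
    by (subst sum.Sigma) (auto simp: finite_Id case_prod_beta)
  also have "\<dots> = (\<Sum>p\<in>?S. (\<lambda>q. F (stdr f (NN f - (fst q \<union> snd q))) (stdr f (snd q)) (stdr f (fst q))) (\<phi> p))"
  proof (rule sum.cong[OF refl])
    fix p assume p: "p \<in> ?S"
    obtain I J where pIJ: "p = (I, J)" by (cases p)
    have I: "is_ideal f I" and J: "is_ideal (PP f I) J" using p pIJ by auto
    define C where "C = NN f - I"
    have finC: "finite C" using C_def by simp
    have Jsub: "J \<subseteq> {1..card C}" using ideal_std_sub[OF finC] J C_def by simp
    have lenP: "length (PP f I) = card C" using length_stdr[OF finC] C_def by simp
    have e1: "PP (PP f I) J = stdr f (en C ` ({1..card C} - J))"
      using stdr_nested[OF finC, of "{1..card C} - J" f] lenP C_def by simp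
    have e2: "en C ` ({1..card C} - J) = NN f - (I \<union> en C ` J)"
      using en_img_diff[OF finC Jsub] C_def by auto
    have e3: "QQ (PP f I) J = stdr f (en C ` J)"
      using stdr_nested[OF finC Jsub, of f] C_def by simp
    show "F (PP (PP f (fst p)) (snd p)) (QQ (PP f (fst p)) (snd p)) (QQ f (fst p)) =
        (\<lambda>q. F (stdr f (NN f - (fst q \<union> snd q))) (stdr f (snd q)) (stdr f (fst q))) (\<phi> p)"
      using e1 e2 e3 pIJ C_def by (simp add: \<phi>_def)
  qed
  also have "\<dots> = (\<Sum>q\<in>\<phi> ` ?S. F (stdr f (NN f - (fst q \<union> snd q))) (stdr f (snd q)) (stdr f (fst q)))"
  proof (rule sum.reindex[symmetric, unfolded comp_def])
    show "inj_on \<phi> ?S"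
    proof (rule inj_onI)
      fix p q assume p: "p \<in> ?S" and q: "q \<in> ?S" and e: "\<phi> p = \<phi> q"
      obtain I J where pIJ: "p = (I, J)" by (cases p)
      obtain I' J' where qIJ: "q = (I', J')" by (cases q)
      have II: "I = I'" using e pIJ qIJ by (simp add: \<phi>_def)
      define C where "C = NN f - I"
      have finC: "finite C" using C_def by simp
      have "J \<subseteq> {1..card C}" using ideal_std_sub[OF finC] p pIJ C_def by auto
      moreover have "J' \<subseteq> {1..card C}" using ideal_std_sub[OF finC] q qIJ II C_def by auto
      moreover have "en C ` J = en C ` J'" using e pIJ qIJ II C_def by (simp add: \<phi>_def)
      ultimately have "J = J'" using en_img_inj[OF finC] by blast
      then show "p = q" using II pIJ qIJ by simp
    qed
  qed
  also have "\<phi> ` ?S = MM f"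
  proof
    show "\<phi> ` ?S \<subseteq> MM f"
    proof
      fix q assume "q \<in> \<phi> ` ?S"
      then obtain I J where IJ: "is_ideal f I" "is_ideal (PP f I) J" and q: "q = \<phi> (I, J)" by auto
      define C where "C = NN f - I"
      have finC: "finite C" using C_def by simp
      have Jsub: "J \<subseteq> {1..card C}" using ideal_std_sub[OF finC] IJ C_def by simp
      have Ysub: "en C ` J \<subseteq> C" using en_img_sub[OF finC Jsub] .
      have "(\<forall>x\<in>C. restr f C x \<in> en C ` J \<longrightarrow> x \<in> en C ` J)"
        using ideal_stdr_iff[OF finC Jsub] IJ C_def by simp
      then have "is_ideal f (I \<union> en C ` J)" using trans_left[OF IJ(1)] Ysub C_def by simp
      moreover have "en C ` J \<inter> I = {}" using Ysub C_def by auto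
      ultimately show "q \<in> MM f" using q IJ C_def by (simp add: \<phi>_def MM_def)
    qed
  next
    show "MM f \<subseteq> \<phi> ` ?S"
    proof
      fix q assume "q \<in> MM f"
      then obtain Z Y where q: "q = (Z, Y)" and Z: "is_ideal f Z" and ZY: "is_ideal f (Z \<union> Y)"
        and d: "Y \<inter> Z = {}" by (auto simp: MM_def)
      define C where "C = NN f - Z"
      have finC: "finite C" using C_def by simp
      have Ysub: "Y \<subseteq> C" using ideal_sub[OF ZY] d C_def by auto
      define J where "J = {j\<in>{1..card C}. en C j \<in> Y}"
      have Jsub: "J \<subseteq> {1..card C}" using J_def by auto
      have imJ: "en C ` J = Y" using en_sub_img[OF finC Ysub] J_def by simp
      have "(\<forall>x\<in>C. restr f C x \<in> Y \<longrightarrow> x \<in> Y)" using trans_left[OF Z] Ysub ZY C_def by simp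
      then have "is_ideal (stdr f C) J" using ideal_stdr_iff[OF finC Jsub] imJ by simp
      then have "(Z, J) \<in> ?S" using Z C_def by simp
      moreover have "\<phi> (Z, J) = q" using q imJ C_def by (simp add: \<phi>_def)
      ultimately show "q \<in> \<phi> ` ?S" by (metis image_eqI)
    qed
  qed
  finally show ?thesis .
qed

lemma coassoc_right:
  fixes F :: "nat list \<Rightarrow> nat list \<Rightarrow> nat list \<Rightarrow> 'a::comm_monoid_add"
  shows "(\<Sum>I\<in>Id f. \<Sum>J\<in>Id (QQ f I). F (PP f I) (PP (QQ f I) J) (QQ (QQ f I) J))
       = (\<Sum>p\<in>MM f. F (stdr f (NN f - (fst p \<union> snd p))) (stdr f (snd p)) (stdr f (fst p)))"
proof -
  let ?S = "Sigma (Id f) (\<lambda>I. Id (QQ f I))"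
  define \<psi> where "\<psi> p = (en (fst p) ` snd p, fst p - en (fst p) ` snd p)" for p :: "nat set \<times> nat set"
  have finS: "finite ?S" using finite_Id by (intro finite_SigmaI) auto
  have "(\<Sum>I\<in>Id f. \<Sum>J\<in>Id (QQ f I). F (PP f I) (PP (QQ f I) J) (QQ (QQ f I) J))
       = (\<Sum>p\<in>?S. F (PP f (fst p)) (PP (QQ f (fst p)) (snd p)) (QQ (QQ f (fst p)) (snd p)))"
    by (subst sum.Sigma) (auto simp: finite_Id case_prod_beta)
  also have "\<dots> = (\<Sum>p\<in>?S. (\<lambda>q. F (stdr f (NN f - (fst q \<union> snd q))) (stdr f (snd q)) (stdr f (fst q))) (\<psi> p))"
  proof (rule sum.cong[OF refl])
    fix p assume p: "p \<in> ?S"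
    obtain I J where pIJ: "p = (I, J)" by (cases p)
    have I: "is_ideal f I" and J: "is_ideal (QQ f I) J" using p pIJ by auto
    have finI: "finite I" using finite_ideal[OF I] .
    have Jsub: "J \<subseteq> {1..card I}" using ideal_std_sub[OF finI] J by simp
    have lenQ: "length (QQ f I) = card I" using length_stdr[OF finI] by simp
    have e1: "PP (QQ f I) J = stdr f (en I ` ({1..card I} - J))"
      using stdr_nested[OF finI, of "{1..card I} - J" f] lenQ by simp
    have e2: "en I ` ({1..card I} - J) = I - en I ` J"
      using en_img_diff[OF finI Jsub] by auto
    have e3: "QQ (QQ f I) J = stdr f (en I ` J)"
      using stdr_nested[OF finI Jsub, of f] by simp
    have e4: "en I ` J \<union> (I - en I ` J) = I" using en_img_sub[OF finI Jsub] by auto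
    show "F (PP f (fst p)) (PP (QQ f (fst p)) (snd p)) (QQ (QQ f (fst p)) (snd p)) =
        (\<lambda>q. F (stdr f (NN f - (fst q \<union> snd q))) (stdr f (snd q)) (stdr f (fst q))) (\<psi> p)"
      using e1 e2 e3 e4 pIJ by (simp add: \<psi>_def)
  qed
  also have "\<dots> = (\<Sum>q\<in>\<psi> ` ?S. F (stdr f (NN f - (fst q \<union> snd q))) (stdr f (snd q)) (stdr f (fst q)))"
  proof (rule sum.reindex[symmetric, unfolded comp_def])
    show "inj_on \<psi> ?S"
    proof (rule inj_onI)
      fix p q assume p: "p \<in> ?S" and q: "q \<in> ?S" and e: "\<psi> p = \<psi> q"
      obtain I J where pIJ: "p = (I, J)" by (cases p)
      obtain I' J' where qIJ: "q = (I', J')" by (cases q)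
      have finI: "finite I" using finite_ideal p pIJ by auto
      have finI': "finite I'" using finite_ideal q qIJ by auto
      have Jsub: "J \<subseteq> {1..card I}" using ideal_std_sub[OF finI] p pIJ by auto
      have Jsub': "J' \<subseteq> {1..card I'}" using ideal_std_sub[OF finI'] q qIJ by auto
      have u: "fst (\<psi> (I,J)) \<union> snd (\<psi> (I,J)) = I" if "finite I" "J \<subseteq> {1..card I}" for I J
      proof -
        have "en I ` J \<subseteq> I" using en_img_sub that by blast
        then show ?thesis unfolding \<psi>_def by auto
      qed
      have "I = fst (\<psi> (I,J)) \<union> snd (\<psi> (I,J))" using u[OF finI Jsub] by simp
      also have "\<dots> = fst (\<psi> (I',J')) \<union> snd (\<psi> (I',J'))" using e pIJ qIJ by simp
      also have "\<dots> = I'" using u[OF finI' Jsub'] .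
      finally have II: "I = I'" .
      have "en I ` J = en I ` J'" using e pIJ qIJ II by (simp add: \<psi>_def)
      then have "J = J'" using en_img_inj[OF finI Jsub] Jsub' II by blast
      then show "p = q" using II pIJ qIJ by simp
    qed
  qed
  also have "\<psi> ` ?S = MM f"
  proof
    show "\<psi> ` ?S \<subseteq> MM f"
    proof
      fix q assume "q \<in> \<psi> ` ?S"
      then obtain I J where IJ: "is_ideal f I" "is_ideal (QQ f I) J" and q: "q = \<psi> (I, J)" by auto
      have finI: "finite I" using finite_ideal[OF IJ(1)] .
      have Jsub: "J \<subseteq> {1..card I}" using ideal_std_sub[OF finI] IJ by simp
      have Zsub: "en I ` J \<subseteq> I" using en_img_sub[OF finI Jsub] .
      have "(\<forall>x\<in>I. restr f I x \<in> en I ` J \<longrightarrow> x \<in> en I ` J)"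
        using ideal_stdr_iff[OF finI Jsub] IJ by simp
      then have "is_ideal f (en I ` J)" using trans_right[OF IJ(1) Zsub] by simp
      moreover have "en I ` J \<union> (I - en I ` J) = I" using Zsub by auto
      ultimately show "q \<in> MM f" using q IJ by (auto simp: \<psi>_def MM_def)
    qed
  next
    show "MM f \<subseteq> \<psi> ` ?S"
    proof
      fix q assume "q \<in> MM f"
      then obtain Z Y where q: "q = (Z, Y)" and Z: "is_ideal f Z" and ZY: "is_ideal f (Z \<union> Y)"
        and d: "Y \<inter> Z = {}" by (auto simp: MM_def)
      define I where "I = Z \<union> Y"
      have finI: "finite I" using finite_ideal[OF ZY] I_def by simp
      have Zsub: "Z \<subseteq> I" using I_def by auto
      define J where "J = {j\<in>{1..card I}. en I j \<in> Z}"
      have Jsub: "J \<subseteq> {1..card I}" using J_def by auto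
      have imJ: "en I ` J = Z" using en_sub_img[OF finI Zsub] J_def by simp
      have "(\<forall>x\<in>I. restr f I x \<in> Z \<longrightarrow> x \<in> Z)" using trans_right[OF ZY[folded I_def] Zsub] Z by simp
      then have "is_ideal (stdr f I) J" using ideal_stdr_iff[OF finI Jsub] imJ by simp
      then have "(I, J) \<in> ?S" using ZY I_def by simp
      moreover have "\<psi> (I, J) = q" using q imJ I_def d by (auto simp: \<psi>_def)
      ultimately show "q \<in> \<psi> ` ?S" by (metis image_eqI)
    qed
  qed
  finally show ?thesis .
qed

lemma coassoc_sum:
  fixes F :: "nat list \<Rightarrow> nat list \<Rightarrow> nat list \<Rightarrow> 'a::comm_monoid_add"
  shows "(\<Sum>I\<in>Id f. \<Sum>J\<in>Id (PP f I). F (PP (PP f I) J) (QQ (PP f I) J) (QQ f I))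
       = (\<Sum>I\<in>Id f. \<Sum>J\<in>Id (QQ f I). F (PP f I) (PP (QQ f I) J) (QQ (QQ f I) J))"
  by (simp only: coassoc_left coassoc_right)


lemma endo_shcat:
  assumes "is_endo f" "is_endo g"
  shows "is_endo (shcat f g)"
  using assms unfolding is_endo_def shcat_def by auto

lemma shcat_assoc: "shcat (shcat f g) h = shcat f (shcat g h)"
  by (simp add: shcat_def add.assoc)

lemma shcat_Nil1[simp]: "shcat [] g = g" by (simp add: shcat_def)
lemma shcat_Nil2[simp]: "shcat f [] = f" by (simp add: shcat_def)
lemma shcat_eq_Nil: "shcat f g = [] \<longleftrightarrow> f = [] \<and> g = []" by (simp add: shcat_def)

lemma PP_empty: "is_endo f \<Longrightarrow> PP f {} = f" using stdr_full by simp
lemma QQ_empty: "QQ f {} = []" by (rule stdr_empty)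
lemma PP_full: "PP f (NN f) = []" by (simp add: stdr_empty)
lemma QQ_full: "is_endo f \<Longrightarrow> QQ f (NN f) = f" using stdr_full by simp

lemma QQ_Nil_iff: "is_ideal f I \<Longrightarrow> QQ f I = [] \<longleftrightarrow> I = {}"
  using length_stdr[OF finite_ideal] finite_ideal by (metis card_eq_0_iff length_0_conv)

lemma PP_Nil_iff: "is_ideal f I \<Longrightarrow> PP f I = [] \<longleftrightarrow> I = NN f"
proof -
  assume I: "is_ideal f I"
  have L: "length (PP f I) = card (NN f - I)" by (simp add: length_stdr)
  have "PP f I = [] \<longleftrightarrow> card (NN f - I) = 0" using L by (metis length_0_conv)
  also have "\<dots> \<longleftrightarrow> NN f - I = {}" by simp
  also have "\<dots> \<longleftrightarrow> I = NN f" using ideal_sub[OF I] by auto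
  finally show ?thesis .
qed

lemma length_QQ: "is_ideal f I \<Longrightarrow> length (QQ f I) = card I"
  using length_stdr finite_ideal by blast

lemma length_PP: "is_ideal f I \<Longrightarrow> length (PP f I) = length f - card I"
proof -
  assume I: "is_ideal f I"
  have "length (PP f I) = card (NN f - I)" using length_stdr by simp
  also have "\<dots> = length f - card I" using ideal_sub[OF I] finite_ideal[OF I] by (simp add: card_Diff_subset)
  finally show ?thesis .
qed

lemma ideal_shcat_iff:
  assumes ef: "is_endo f" and eg: "is_endo g"
  shows "is_ideal (shcat f g) K \<longleftrightarrow>
     (is_ideal f (K \<inter> NN f) \<and> is_ideal g {j\<in>NN g. j + length f \<in> K} \<and>
      K = (K \<inter> NN f) \<union> (\<lambda>j. j + length f) ` {j\<in>NN g. j + length f \<in> K})"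
proof -
  let ?n = "length f"
  have ap1: "\<And>j. j \<in> NN f \<Longrightarrow> ap (shcat f g) j = ap f j" using ap_shcat by auto
  have ap2: "\<And>j. j \<in> NN g \<Longrightarrow> ap (shcat f g) (j + ?n) = ap g j + ?n" using ap_shcat by auto
  have rf: "\<And>j. j \<in> NN f \<Longrightarrow> ap f j \<in> NN f" using ef by (simp add: is_endo_ap)
  have rg: "\<And>j. j \<in> NN g \<Longrightarrow> ap g j \<in> NN g" using eg by (simp add: is_endo_ap)
  show ?thesis
  proof
    assume K: "is_ideal (shcat f g) K"
    have Ks: "K \<subseteq> {1..?n + length g}" using ideal_sub[OF K] by simp
    have i1: "is_ideal f (K \<inter> NN f)"
      unfolding is_ideal_def
    proof (intro conjI ballI impI)
      fix j assume j: "j \<in> NN f" and a: "ap f j \<in> K \<inter> NN f"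
      have "ap (shcat f g) j \<in> K" using a ap1[OF j] by simp
      moreover have "j \<in> NN (shcat f g)" using j by simp
      ultimately show "j \<in> K \<inter> NN f" using K j unfolding is_ideal_def by blast
    qed auto
    have i2: "is_ideal g {j\<in>NN g. j + ?n \<in> K}"
      unfolding is_ideal_def
    proof (intro conjI ballI impI)
      fix j assume j: "j \<in> NN g" and a: "ap g j \<in> {j\<in>NN g. j + ?n \<in> K}"
      have "ap (shcat f g) (j + ?n) \<in> K" using a ap2[OF j] by simp
      moreover have "j + ?n \<in> NN (shcat f g)" using j by simp
      ultimately show "j \<in> {j\<in>NN g. j + ?n \<in> K}" using K j unfolding is_ideal_def by blast
    qed auto
    have "K = (K \<inter> NN f) \<union> (\<lambda>j. j + ?n) ` {j\<in>NN g. j + ?n \<in> K}"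
    proof
      show "K \<subseteq> (K \<inter> NN f) \<union> (\<lambda>j. j + ?n) ` {j\<in>NN g. j + ?n \<in> K}"
      proof
        fix x assume x: "x \<in> K"
        show "x \<in> (K \<inter> NN f) \<union> (\<lambda>j. j + ?n) ` {j\<in>NN g. j + ?n \<in> K}"
        proof (cases "x \<le> ?n")
          case True then show ?thesis using x Ks by auto
        next
          case False
          then have "x = (x - ?n) + ?n" "x - ?n \<in> NN g" using x Ks by auto
          then show ?thesis using x by (metis (mono_tags, lifting) UnI2 image_eqI mem_Collect_eq)
        qed
      qed
    qed auto
    then show "is_ideal f (K \<inter> NN f) \<and> is_ideal g {j\<in>NN g. j + ?n \<in> K} \<and>
      K = (K \<inter> NN f) \<union> (\<lambda>j. j + ?n) ` {j\<in>NN g. j + ?n \<in> K}" using i1 i2 by simp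
  next
    assume h: "is_ideal f (K \<inter> NN f) \<and> is_ideal g {j\<in>NN g. j + ?n \<in> K} \<and>
      K = (K \<inter> NN f) \<union> (\<lambda>j. j + ?n) ` {j\<in>NN g. j + ?n \<in> K}"
    show "is_ideal (shcat f g) K"
      unfolding is_ideal_def
    proof (intro conjI ballI impI)
      show "K \<subseteq> NN (shcat f g)"
      proof -
        have "K \<inter> NN f \<subseteq> NN (shcat f g)" by auto
        moreover have "(\<lambda>j. j + ?n) ` {j\<in>NN g. j + ?n \<in> K} \<subseteq> NN (shcat f g)" by auto
        ultimately show ?thesis using h by blast
      qed
    next
      fix j assume j: "j \<in> NN (shcat f g)" and a: "ap (shcat f g) j \<in> K"
      show "j \<in> K"
      proof (cases "j \<le> ?n")
        case True
        then have jf: "j \<in> NN f" using j by simp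
        have "ap f j \<in> K \<inter> NN f" using a ap1[OF jf] rf[OF jf] by simp
        then have "j \<in> K \<inter> NN f" using h jf unfolding is_ideal_def by blast
        then show ?thesis by simp
      next
        case False
        then have jg: "j - ?n \<in> NN g" and jj: "j = (j - ?n) + ?n" using j by auto
        have "ap g (j - ?n) + ?n \<in> K" using a ap2[OF jg] jj by simp
        then have "ap g (j - ?n) \<in> {j\<in>NN g. j + ?n \<in> K}" using rg[OF jg] by simp
        then have "j - ?n \<in> {j\<in>NN g. j + ?n \<in> K}" using h jg unfolding is_ideal_def by blast
        then show ?thesis using jj by simp
      qed
    qed
  qed
qed

lemma mult_sum:
  fixes G :: "nat list \<Rightarrow> nat list \<Rightarrow> 'a::comm_monoid_add"
  assumes ef: "is_endo f" and eg: "is_endo g"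
  shows "(\<Sum>K\<in>Id (shcat f g). G (PP (shcat f g) K) (QQ (shcat f g) K))
       = (\<Sum>I\<in>Id f. \<Sum>J\<in>Id g. G (shcat (PP f I) (PP g J)) (shcat (QQ f I) (QQ g J)))"
proof -
  let ?n = "length f"
  define \<chi> where "\<chi> p = fst p \<union> (\<lambda>j. j + ?n) ` snd p" for p :: "nat set \<times> nat set"
  have "(\<Sum>I\<in>Id f. \<Sum>J\<in>Id g. G (shcat (PP f I) (PP g J)) (shcat (QQ f I) (QQ g J)))
      = (\<Sum>p\<in>Id f \<times> Id g. G (shcat (PP f (fst p)) (PP g (snd p))) (shcat (QQ f (fst p)) (QQ g (snd p))))"
    by (subst sum.cartesian_product) (simp add: case_prod_beta)
  also have "\<dots> = (\<Sum>p\<in>Id f \<times> Id g. (\<lambda>K. G (PP (shcat f g) K) (QQ (shcat f g) K)) (\<chi> p))"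
  proof (rule sum.cong[OF refl])
    fix p assume p: "p \<in> Id f \<times> Id g"
    obtain I J where pIJ: "p = (I, J)" by (cases p)
    have I: "I \<subseteq> NN f" and J: "J \<subseteq> NN g" using p pIJ ideal_sub by auto
    have q: "QQ (shcat f g) (\<chi> p) = shcat (QQ f I) (QQ g J)"
      using stdr_shcat[OF ef eg I J] pIJ by (simp add: \<chi>_def)
    have "NN (shcat f g) - \<chi> p = (NN f - I) \<union> (\<lambda>j. j + ?n) ` (NN g - J)"
    proof
      show "NN (shcat f g) - \<chi> p \<subseteq> (NN f - I) \<union> (\<lambda>j. j + ?n) ` (NN g - J)"
      proof
        fix x assume x: "x \<in> NN (shcat f g) - \<chi> p"
        show "x \<in> (NN f - I) \<union> (\<lambda>j. j + ?n) ` (NN g - J)"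
        proof (cases "x \<le> ?n")
          case True then show ?thesis using x pIJ by (auto simp: \<chi>_def)
        next
          case False
          then have a: "x = (x - ?n) + ?n" "x - ?n \<in> NN g" using x by auto
          have "x - ?n \<notin> J"
          proof
            assume "x - ?n \<in> J"
            then have "x \<in> (\<lambda>j. j + ?n) ` J" using a(1) by (metis image_eqI)
            then show False using x pIJ by (simp add: \<chi>_def)
          qed
          then show ?thesis using a by (metis UnI2 image_eqI DiffI)
        qed
      qed
    next
      show "(NN f - I) \<union> (\<lambda>j. j + ?n) ` (NN g - J) \<subseteq> NN (shcat f g) - \<chi> p"
        using pIJ I J by (auto simp: \<chi>_def)
    qed
    then have pp: "PP (shcat f g) (\<chi> p) = shcat (PP f I) (PP g J)"
      using stdr_shcat[OF ef eg, of "NN f - I" "NN g - J"] by simp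
    show "G (shcat (PP f (fst p)) (PP g (snd p))) (shcat (QQ f (fst p)) (QQ g (snd p))) =
        (\<lambda>K. G (PP (shcat f g) K) (QQ (shcat f g) K)) (\<chi> p)"
      using pp q pIJ by simp
  qed
  also have "\<dots> = (\<Sum>K\<in>\<chi> ` (Id f \<times> Id g). G (PP (shcat f g) K) (QQ (shcat f g) K))"
  proof (rule sum.reindex[symmetric, unfolded comp_def])
    show "inj_on \<chi> (Id f \<times> Id g)"
    proof (rule inj_onI)
      fix p q assume p: "p \<in> Id f \<times> Id g" and q: "q \<in> Id f \<times> Id g" and e: "\<chi> p = \<chi> q"
      have s: "\<And>r. r \<in> Id f \<times> Id g \<Longrightarrow> \<chi> r \<inter> NN f = fst r \<and> {j\<in>NN g. j + ?n \<in> \<chi> r} = snd r"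
      proof -
        fix r assume r: "r \<in> Id f \<times> Id g"
        have r1: "is_ideal f (fst r)" "is_ideal g (snd r)" using r by (auto simp: mem_Times_iff)
        have a: "fst r \<subseteq> NN f" "snd r \<subseteq> NN g" using ideal_sub[OF r1(1)] ideal_sub[OF r1(2)] by auto
        have "\<chi> r \<inter> NN f = fst r" using a by (auto simp: \<chi>_def)
        moreover have "{j\<in>NN g. j + ?n \<in> \<chi> r} = snd r" using a by (auto simp: \<chi>_def)
        ultimately show "\<chi> r \<inter> NN f = fst r \<and> {j\<in>NN g. j + ?n \<in> \<chi> r} = snd r" by simp
      qed
      show "p = q" using s[OF p] s[OF q] e by (metis prod.expand)
    qed
  qed
  also have "\<chi> ` (Id f \<times> Id g) = Id (shcat f g)"
  proof
    show "\<chi> ` (Id f \<times> Id g) \<subseteq> Id (shcat f g)"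
    proof
      fix K assume "K \<in> \<chi> ` (Id f \<times> Id g)"
      then obtain I J where IJ: "is_ideal f I" "is_ideal g J" and K: "K = \<chi> (I, J)" by auto
      have a: "I \<subseteq> NN f" "J \<subseteq> NN g" using IJ ideal_sub by auto
      have "K \<inter> NN f = I" using a K by (auto simp: \<chi>_def)
      moreover have "{j\<in>NN g. j + ?n \<in> K} = J" using a K by (auto simp: \<chi>_def)
      ultimately show "K \<in> Id (shcat f g)" using ideal_shcat_iff[OF ef eg, of K] IJ K by (simp add: \<chi>_def)
    qed
  next
    show "Id (shcat f g) \<subseteq> \<chi> ` (Id f \<times> Id g)"
    proof
      fix K assume "K \<in> Id (shcat f g)"
      then have h: "is_ideal f (K \<inter> NN f)" "is_ideal g {j\<in>NN g. j + ?n \<in> K}"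
        "K = (K \<inter> NN f) \<union> (\<lambda>j. j + ?n) ` {j\<in>NN g. j + ?n \<in> K}"
        using ideal_shcat_iff[OF ef eg, of K] by auto
      then have "K = \<chi> (K \<inter> NN f, {j\<in>NN g. j + ?n \<in> K})" by (simp add: \<chi>_def)
      then show "K \<in> \<chi> ` (Id f \<times> Id g)" using h(1,2) by blast
    qed
  qed
  finally show ?thesis by simp
qed


lemma bvec_of_bool: "bvec x y = (of_bool (y = x) :: 'k::zero_neq_one)"
  by (simp add: bvec_def)

lemma supp_bvec: "supp (bvec x :: 'a \<Rightarrow> 'k::zero_neq_one) = {x}"
  by (auto simp: supp_def bvec_def)

lemma lext_sup:
  fixes v :: "'a \<Rightarrow> 'k::field"
  assumes "finite T" "supp v \<subseteq> T"
  shows "lext M v y = (\<Sum>x\<in>T. v x * M x y)"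
  unfolding lext_def
  by (rule sum.mono_neutral_left) (use assms in \<open>auto simp: supp_def\<close>)

lemma lfun_sup:
  fixes v :: "'a \<Rightarrow> 'k::field"
  assumes "finite T" "supp v \<subseteq> T"
  shows "lfun phi v = (\<Sum>x\<in>T. v x * phi x)"
  unfolding lfun_def
  by (rule sum.mono_neutral_left) (use assms in \<open>auto simp: supp_def\<close>)

lemma lext_bvec: "lext M (bvec x :: 'a \<Rightarrow> 'k::field) = M x"
proof
  fix y
  have "supp (bvec x :: 'a \<Rightarrow> 'k) \<subseteq> {x}" by (simp add: supp_bvec)
  from lext_sup[OF _ this] have "lext M (bvec x :: 'a \<Rightarrow> 'k) y = (\<Sum>z\<in>{x}. bvec x z * M z y)" by simp
  then show "lext M (bvec x :: 'a \<Rightarrow> 'k) y = M x y" by (simp add: bvec_def)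
qed

lemma lfun_bvec: "lfun phi (bvec x :: 'a \<Rightarrow> 'k::field) = phi x"
proof -
  have "supp (bvec x :: 'a \<Rightarrow> 'k) \<subseteq> {x}" by (simp add: supp_bvec)
  from lfun_sup[OF _ this] have "lfun phi (bvec x :: 'a \<Rightarrow> 'k) = (\<Sum>z\<in>{x}. bvec x z * phi z)" by simp
  then show ?thesis by (simp add: bvec_def)
qed

lemma supp_lin_sub:
  fixes v :: "'i \<Rightarrow> 'a \<Rightarrow> 'k::field"
  shows "supp (\<lambda>z. \<Sum>i\<in>S. c i * v i z) \<subseteq> (\<Union>i\<in>S. supp (v i))"
proof
  fix z assume "z \<in> supp (\<lambda>z. \<Sum>i\<in>S. c i * v i z)"
  then have "(\<Sum>i\<in>S. c i * v i z) \<noteq> 0" by (simp add: supp_def)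
  then obtain i where "i \<in> S" "c i * v i z \<noteq> 0" by (meson sum.neutral)
  then show "z \<in> (\<Union>i\<in>S. supp (v i))" by (auto simp: supp_def)
qed

lemma finite_supp_lin:
  fixes v :: "'i \<Rightarrow> 'a \<Rightarrow> 'k::field"
  assumes "finite S" "\<And>i. i \<in> S \<Longrightarrow> finite (supp (v i))"
  shows "finite (supp (\<lambda>z. \<Sum>i\<in>S. c i * v i z))"
  using supp_lin_sub[of c v S] assms finite_subset by blast

lemma finite_supp_sum:
  fixes v :: "'i \<Rightarrow> 'a \<Rightarrow> 'k::field"
  assumes "finite S" "\<And>i. i \<in> S \<Longrightarrow> finite (supp (v i))"
  shows "finite (supp (\<lambda>z. \<Sum>i\<in>S. v i z))"
  using finite_supp_lin[of S v "\<lambda>_. 1"] assms by simp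

lemma lext_lin:
  fixes v :: "'i \<Rightarrow> 'a \<Rightarrow> 'k::field"
  assumes S: "finite S" and fv: "\<And>i. i \<in> S \<Longrightarrow> finite (supp (v i))"
  shows "lext M (\<lambda>z. \<Sum>i\<in>S. c i * v i z) y = (\<Sum>i\<in>S. c i * lext M (v i) y)"
proof -
  let ?T = "\<Union>i\<in>S. supp (v i)"
  have fT: "finite ?T" using S fv by blast
  have "lext M (\<lambda>z. \<Sum>i\<in>S. c i * v i z) y = (\<Sum>x\<in>?T. (\<Sum>i\<in>S. c i * v i x) * M x y)"
    by (rule lext_sup[OF fT supp_lin_sub])
  also have "\<dots> = (\<Sum>x\<in>?T. \<Sum>i\<in>S. c i * (v i x * M x y))"
    by (simp add: sum_distrib_right mult.assoc)
  also have "\<dots> = (\<Sum>i\<in>S. \<Sum>x\<in>?T. c i * (v i x * M x y))"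
    by (rule sum.swap)
  also have "\<dots> = (\<Sum>i\<in>S. c i * (\<Sum>x\<in>?T. v i x * M x y))"
    by (simp add: sum_distrib_left)
  also have "\<dots> = (\<Sum>i\<in>S. c i * lext M (v i) y)"
  proof (rule sum.cong[OF refl])
    fix i assume i: "i \<in> S"
    have "lext M (v i) y = (\<Sum>x\<in>?T. v i x * M x y)"
      by (rule lext_sup[OF fT]) (use i in blast)
    then show "c i * (\<Sum>x\<in>?T. v i x * M x y) = c i * lext M (v i) y" by simp
  qed
  finally show ?thesis .
qed

lemma lext_sum:
  fixes v :: "'i \<Rightarrow> 'a \<Rightarrow> 'k::field"
  assumes "finite S" "\<And>i. i \<in> S \<Longrightarrow> finite (supp (v i))"
  shows "lext M (\<lambda>z. \<Sum>i\<in>S. v i z) y = (\<Sum>i\<in>S. lext M (v i) y)"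
  using lext_lin[of S v M "\<lambda>_. 1" y] assms by simp

lemma lfun_lin:
  fixes v :: "'i \<Rightarrow> 'a \<Rightarrow> 'k::field"
  assumes S: "finite S" and fv: "\<And>i. i \<in> S \<Longrightarrow> finite (supp (v i))"
  shows "lfun phi (\<lambda>z. \<Sum>i\<in>S. c i * v i z) = (\<Sum>i\<in>S. c i * lfun phi (v i))"
proof -
  let ?T = "\<Union>i\<in>S. supp (v i)"
  have fT: "finite ?T" using S fv by blast
  have "lfun phi (\<lambda>z. \<Sum>i\<in>S. c i * v i z) = (\<Sum>x\<in>?T. (\<Sum>i\<in>S. c i * v i x) * phi x)"
    by (rule lfun_sup[OF fT supp_lin_sub])
  also have "\<dots> = (\<Sum>x\<in>?T. \<Sum>i\<in>S. c i * (v i x * phi x))"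
    by (simp add: sum_distrib_right mult.assoc)
  also have "\<dots> = (\<Sum>i\<in>S. \<Sum>x\<in>?T. c i * (v i x * phi x))"
    by (rule sum.swap)
  also have "\<dots> = (\<Sum>i\<in>S. c i * (\<Sum>x\<in>?T. v i x * phi x))"
    by (simp add: sum_distrib_left)
  also have "\<dots> = (\<Sum>i\<in>S. c i * lfun phi (v i))"
  proof (rule sum.cong[OF refl])
    fix i assume i: "i \<in> S"
    have "lfun phi (v i) = (\<Sum>x\<in>?T. v i x * phi x)"
      by (rule lfun_sup[OF fT]) (use i in blast)
    then show "c i * (\<Sum>x\<in>?T. v i x * phi x) = c i * lfun phi (v i)" by simp
  qed
  finally show ?thesis .
qed

lemma finite_supp_lext:
  fixes w :: "'a \<Rightarrow> 'k::field"
  assumes "finite (supp w)" "\<And>x. finite (supp (M x))"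
  shows "finite (supp (lext M w))"
proof -
  have "supp (lext M w) \<subseteq> (\<Union>x\<in>supp w. supp (M x))"
  proof
    fix y assume "y \<in> supp (lext M w)"
    then have "(\<Sum>x\<in>supp w. w x * M x y) \<noteq> 0" by (simp add: supp_def lext_def)
    then obtain x where "x \<in> supp w" "w x * M x y \<noteq> 0" by (meson sum.neutral)
    then show "y \<in> (\<Union>x\<in>supp w. supp (M x))" by (auto simp: supp_def)
  qed
  then show ?thesis using assms finite_subset by blast
qed

lemma vec_expand:
  fixes u :: "'a \<Rightarrow> 'k::field"
  assumes "finite (supp u)"
  shows "u = (\<lambda>y. \<Sum>a\<in>supp u. u a * bvec a y)"
proof
  fix y
  have "(\<Sum>a\<in>supp u. u a * bvec a y) = (\<Sum>a\<in>supp u. if y = a then u a else 0)"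
    by (rule sum.cong) (auto simp: bvec_def)
  also have "\<dots> = u y" using assms by (simp add: supp_def)
  finally show "u y = (\<Sum>a\<in>supp u. u a * bvec a y)" by simp
qed

lemma tens_bvec: "tens (bvec a) (bvec b) = (bvec (a, b) :: _ \<Rightarrow> 'k::field)"
  by (auto simp: tens_def bvec_def)

lemma tens_apply: "tens u v (a, b) = u a * v b" by (simp add: tens_def)

lemma supp_tens: "supp (tens u v) \<subseteq> supp u \<times> supp v"
  by (auto simp: supp_def tens_def)

lemma finite_supp_tens: "finite (supp u) \<Longrightarrow> finite (supp v) \<Longrightarrow> finite (supp (tens u v))"
  using supp_tens finite_subset by (metis finite_SigmaI)

lemma tens_lin_left:
  fixes u :: "'i \<Rightarrow> 'a \<Rightarrow> 'k::field"
  shows "tens (\<lambda>z. \<Sum>i\<in>S. c i * u i z) v = (\<lambda>p. \<Sum>i\<in>S. c i * tens (u i) v p)"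
  by (auto simp: tens_def sum_distrib_right mult.assoc)

lemma tens_lin_right:
  fixes v :: "'i \<Rightarrow> 'a \<Rightarrow> 'k::field"
  shows "tens u (\<lambda>z. \<Sum>i\<in>S. c i * v i z) = (\<lambda>p. \<Sum>i\<in>S. c i * tens u (v i) p)"
  by (auto simp: tens_def sum_distrib_left mult.left_commute)

lemma tens_sum_left:
  fixes u :: "'i \<Rightarrow> 'a \<Rightarrow> 'k::field"
  shows "tens (\<lambda>z. \<Sum>i\<in>S. u i z) v = (\<lambda>p. \<Sum>i\<in>S. tens (u i) v p)"
  by (auto simp: tens_def sum_distrib_right)

lemma tens_sum_right:
  fixes v :: "'i \<Rightarrow> 'a \<Rightarrow> 'k::field"
  shows "tens u (\<lambda>z. \<Sum>i\<in>S. v i z) = (\<lambda>p. \<Sum>i\<in>S. tens u (v i) p)"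
  by (auto simp: tens_def sum_distrib_left)

section \<open>The monoid of endofunctions\<close>

definition mon :: "endo \<Rightarrow> endo \<Rightarrow> endo" where
  "mon a b = abs_endo (shcat (rep_endo a) (rep_endo b))"

abbreviation E0 :: endo where "E0 \<equiv> abs_endo []"

lemma endo_rep: "is_endo (rep_endo a)"
  using rep_endo by simp

lemma rep_abs: "is_endo L \<Longrightarrow> rep_endo (abs_endo L) = L"
  by (simp add: abs_endo_inverse)

lemma endo_Nil: "is_endo []" by (simp add: is_endo_def)

lemma rep_E0: "rep_endo E0 = []" using rep_abs[OF endo_Nil] .

lemma abs_eq_iff: "is_endo L \<Longrightarrow> abs_endo L = g \<longleftrightarrow> L = rep_endo g"
  by (metis rep_abs rep_endo_inverse)

lemma rep_mon: "rep_endo (mon a b) = shcat (rep_endo a) (rep_endo b)"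
  unfolding mon_def by (rule rep_abs[OF endo_shcat[OF endo_rep endo_rep]])

lemma mon_assoc: "mon (mon a b) c = mon a (mon b c)"
  unfolding mon_def by (simp add: rep_mon[unfolded mon_def] shcat_assoc)

lemma mon_E0_left[simp]: "mon E0 a = a"
  unfolding mon_def by (simp add: rep_E0 rep_endo_inverse)

lemma mon_E0_right[simp]: "mon a E0 = a"
  unfolding mon_def by (simp add: rep_E0 rep_endo_inverse)

lemma mon_abs: "is_endo f \<Longrightarrow> is_endo g \<Longrightarrow> mon (abs_endo f) (abs_endo g) = abs_endo (shcat f g)"
  by (simp add: mon_def rep_abs)

lemma efmu_eq: "efmu p = bvec (mon (fst p) (snd p))"
  by (simp add: efmu_def mon_def case_prod_beta)

lemma efmu_pair: "efmu (a, b) = bvec (mon a b)"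
  by (simp add: efmu_eq)

lemma finite_supp_efmu: "finite (supp (efmu p :: endo \<Rightarrow> 'k::field))"
  by (simp add: efmu_eq supp_bvec)

definition vmul :: "(endo \<Rightarrow> 'k::field) \<Rightarrow> (endo \<Rightarrow> 'k) \<Rightarrow> endo \<Rightarrow> 'k" where
  "vmul u v = lext efmu (tens u v)"

lemma finite_supp_vmul:
  "finite (supp u) \<Longrightarrow> finite (supp v) \<Longrightarrow> finite (supp (vmul u v))"
  unfolding vmul_def by (rule finite_supp_lext[OF finite_supp_tens finite_supp_efmu])

lemma vmul_bvec: "vmul (bvec a) (bvec b) = (bvec (mon a b) :: endo \<Rightarrow> 'k::field)"
  by (simp add: vmul_def tens_bvec lext_bvec efmu_pair)

lemma vmul_lin_left:
  fixes u :: "'i \<Rightarrow> endo \<Rightarrow> 'k::field"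
  assumes "finite S" "\<And>i. i \<in> S \<Longrightarrow> finite (supp (u i))" "finite (supp v)"
  shows "vmul (\<lambda>z. \<Sum>i\<in>S. c i * u i z) v y = (\<Sum>i\<in>S. c i * vmul (u i) v y)"
  unfolding vmul_def tens_lin_left
  by (rule lext_lin) (use assms finite_supp_tens in auto)

lemma vmul_lin_right:
  fixes v :: "'i \<Rightarrow> endo \<Rightarrow> 'k::field"
  assumes "finite S" "\<And>i. i \<in> S \<Longrightarrow> finite (supp (v i))" "finite (supp u)"
  shows "vmul u (\<lambda>z. \<Sum>i\<in>S. c i * v i z) y = (\<Sum>i\<in>S. c i * vmul u (v i) y)"
  unfolding vmul_def tens_lin_right
  by (rule lext_lin) (use assms finite_supp_tens in auto)

lemma vmul_sum_left:
  fixes u :: "'i \<Rightarrow> endo \<Rightarrow> 'k::field"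
  assumes "finite S" "\<And>i. i \<in> S \<Longrightarrow> finite (supp (u i))" "finite (supp v)"
  shows "vmul (\<lambda>z. \<Sum>i\<in>S. u i z) v y = (\<Sum>i\<in>S. vmul (u i) v y)"
  using vmul_lin_left[of S u v "\<lambda>_. 1" y] assms by simp

lemma vmul_sum_right:
  fixes v :: "'i \<Rightarrow> endo \<Rightarrow> 'k::field"
  assumes "finite S" "\<And>i. i \<in> S \<Longrightarrow> finite (supp (v i))" "finite (supp u)"
  shows "vmul u (\<lambda>z. \<Sum>i\<in>S. v i z) y = (\<Sum>i\<in>S. vmul u (v i) y)"
  using vmul_lin_right[of S v u "\<lambda>_. 1" y] assms by simp

lemma finite_supp_bvec: "finite (supp (bvec x :: _ \<Rightarrow> 'k::field))"
  by (simp add: supp_bvec)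

lemma vmul_bvec_left:
  fixes v :: "endo \<Rightarrow> 'k::field"
  assumes "finite (supp v)"
  shows "vmul (bvec a) v y = (\<Sum>b\<in>supp v. v b * bvec (mon a b) y)"
proof -
  have "vmul (bvec a) v y = vmul (bvec a) (\<lambda>z. \<Sum>b\<in>supp v. v b * bvec b z) y"
    using vec_expand[OF assms] by metis
  also have "\<dots> = (\<Sum>b\<in>supp v. v b * vmul (bvec a) (bvec b) y)"
    by (rule vmul_lin_right) (use assms finite_supp_bvec in auto)
  finally show ?thesis by (simp add: vmul_bvec)
qed

lemma vmul_expand_left:
  fixes u v :: "endo \<Rightarrow> 'k::field"
  assumes "finite (supp u)" "finite (supp v)"
  shows "vmul u v y = (\<Sum>a\<in>supp u. u a * vmul (bvec a) v y)"
proof -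
  have "vmul u v y = vmul (\<lambda>z. \<Sum>a\<in>supp u. u a * bvec a z) v y"
    using vec_expand[OF assms(1)] by metis
  also have "\<dots> = (\<Sum>a\<in>supp u. u a * vmul (bvec a) v y)"
    by (rule vmul_lin_left) (use assms finite_supp_bvec in auto)
  finally show ?thesis .
qed

lemma vmul_expand_left_fun:
  fixes u v :: "endo \<Rightarrow> 'k::field"
  assumes "finite (supp u)" "finite (supp v)"
  shows "vmul u v = (\<lambda>y. \<Sum>a\<in>supp u. u a * vmul (bvec a) v y)"
  using vmul_expand_left[OF assms] by blast

lemma vmul_assoc:
  fixes u v w :: "endo \<Rightarrow> 'k::field"
  assumes fu: "finite (supp u)" and fv: "finite (supp v)" and fw: "finite (supp w)"
  shows "vmul (vmul u v) w = vmul u (vmul v w)"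
proof
  fix y
  have fb: "\<And>a. finite (supp (bvec a :: endo \<Rightarrow> 'k))" by (rule finite_supp_bvec)
  have "vmul (vmul u v) w y = vmul (\<lambda>z. \<Sum>a\<in>supp u. u a * vmul (bvec a) v z) w y"
    by (simp only: vmul_expand_left_fun[OF fu fv])
  also have "\<dots> = (\<Sum>a\<in>supp u. u a * vmul (vmul (bvec a) v) w y)"
    by (rule vmul_lin_left) (use fu fv fw finite_supp_vmul fb in auto)
  also have "\<dots> = (\<Sum>a\<in>supp u. u a * (\<Sum>b\<in>supp v. v b * (\<Sum>d\<in>supp w. w d * bvec (mon (mon a b) d) y)))"
  proof (rule sum.cong[OF refl])
    fix a
    have "vmul (bvec a) v = (\<lambda>z. \<Sum>b\<in>supp v. v b * bvec (mon a b) z)"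
      using vmul_bvec_left[OF fv] by blast
    then have "vmul (vmul (bvec a) v) w y = vmul (\<lambda>z. \<Sum>b\<in>supp v. v b * bvec (mon a b) z) w y"
      by simp
    also have "\<dots> = (\<Sum>b\<in>supp v. v b * vmul (bvec (mon a b)) w y)"
      by (rule vmul_lin_left) (use fv fw fb in auto)
    also have "\<dots> = (\<Sum>b\<in>supp v. v b * (\<Sum>d\<in>supp w. w d * bvec (mon (mon a b) d) y))"
      using vmul_bvec_left[OF fw] by simp
    finally show "u a * vmul (vmul (bvec a) v) w y =
      u a * (\<Sum>b\<in>supp v. v b * (\<Sum>d\<in>supp w. w d * bvec (mon (mon a b) d) y))" by simp
  qed
  also have "\<dots> = (\<Sum>a\<in>supp u. u a * vmul (bvec a) (vmul v w) y)"
  proof (rule sum.cong[OF refl])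
    fix a
    have "vmul v w = (\<lambda>z. \<Sum>b\<in>supp v. v b * vmul (bvec b) w z)"
      using vmul_expand_left_fun[OF fv fw] .
    then have "vmul (bvec a) (vmul v w) y = vmul (bvec a) (\<lambda>z. \<Sum>b\<in>supp v. v b * vmul (bvec b) w z) y"
      by simp
    also have "\<dots> = (\<Sum>b\<in>supp v. v b * vmul (bvec a) (vmul (bvec b) w) y)"
      by (rule vmul_lin_right) (use fv fw fb finite_supp_vmul in auto)
    also have "\<dots> = (\<Sum>b\<in>supp v. v b * (\<Sum>d\<in>supp w. w d * bvec (mon (mon a b) d) y))"
    proof (rule sum.cong[OF refl])
      fix b
      have "vmul (bvec b) w = (\<lambda>z. \<Sum>d\<in>supp w. w d * bvec (mon b d) z)"
        using vmul_bvec_left[OF fw] by blast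
      then have "vmul (bvec a) (vmul (bvec b) w) y = vmul (bvec a) (\<lambda>z. \<Sum>d\<in>supp w. w d * bvec (mon b d) z) y"
        by simp
      also have "\<dots> = (\<Sum>d\<in>supp w. w d * vmul (bvec a) (bvec (mon b d)) y)"
        by (rule vmul_lin_right) (use fw fb in auto)
      also have "\<dots> = (\<Sum>d\<in>supp w. w d * bvec (mon (mon a b) d) y)"
        by (simp add: vmul_bvec mon_assoc)
      finally show "v b * vmul (bvec a) (vmul (bvec b) w) y = v b * (\<Sum>d\<in>supp w. w d * bvec (mon (mon a b) d) y)"
        by simp
    qed
    finally show "u a * (\<Sum>b\<in>supp v. v b * (\<Sum>d\<in>supp w. w d * bvec (mon (mon a b) d) y)) =
      u a * vmul (bvec a) (vmul v w) y" by simp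
  qed
  also have "\<dots> = vmul u (vmul v w) y"
    using vmul_expand_left[OF fu finite_supp_vmul[OF fv fw]] by simp
  finally show "vmul (vmul u v) w y = vmul u (vmul v w) y" .
qed

lemma vmul_one_right:
  fixes u :: "endo \<Rightarrow> 'k::field"
  assumes "finite (supp u)"
  shows "vmul u efone = u"
proof
  fix y
  have "vmul u efone y = (\<Sum>a\<in>supp u. u a * vmul (bvec a) (bvec E0) y)"
    unfolding efone_def by (rule vmul_expand_left[OF assms finite_supp_bvec])
  also have "\<dots> = (\<Sum>a\<in>supp u. u a * bvec a y)" by (simp add: vmul_bvec)
  also have "\<dots> = u y" using vec_expand[OF assms] by metis
  finally show "vmul u efone y = u y" .
qed

lemma vmul_one_left:
  fixes u :: "endo \<Rightarrow> 'k::field"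
  assumes "finite (supp u)"
  shows "vmul efone u = u"
proof
  fix y
  have "vmul efone u y = (\<Sum>b\<in>supp u. u b * bvec (mon E0 b) y)"
    unfolding efone_def by (rule vmul_bvec_left[OF assms])
  also have "\<dots> = u y" using vec_expand[OF assms] by simp metis
  finally show "vmul efone u y = u y" .
qed

section \<open>The coproduct\<close>

abbreviation AE :: "nat list \<Rightarrow> endo" where "AE \<equiv> abs_endo"

definition Dv :: "nat list \<Rightarrow> endo \<times> endo \<Rightarrow> 'k::field" where
  "Dv f = (\<lambda>p. \<Sum>I\<in>Id f. bvec (AE (PP f I), AE (QQ f I)) p)"

lemma efDelta_eq: "(efDelta x :: _ \<Rightarrow> 'k::field) = Dv (rep_endo x)"
proof
  fix p :: "endo \<times> endo"
  obtain g h where p: "p = (g, h)" by (cases p)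
  let ?f = "rep_endo x"
  have "(Dv ?f p :: 'k) = (\<Sum>I\<in>Id ?f. of_bool ((g, h) = (AE (PP ?f I), AE (QQ ?f I))))"
    unfolding Dv_def p by (simp add: bvec_of_bool)
  also have "\<dots> = of_nat (card (Id ?f \<inter> {I. (g, h) = (AE (PP ?f I), AE (QQ ?f I))}))"
    using finite_Id by simp
  also have "Id ?f \<inter> {I. (g, h) = (AE (PP ?f I), AE (QQ ?f I))} =
      {I. is_ideal ?f I \<and> PP ?f I = rep_endo g \<and> QQ ?f I = rep_endo h}"
  proof -
    have "((g, h) = (AE (PP ?f I), AE (QQ ?f I))) = (PP ?f I = rep_endo g \<and> QQ ?f I = rep_endo h)"
      if I: "is_ideal ?f I" for I
    proof -
      have e1: "AE (PP ?f I) = g \<longleftrightarrow> PP ?f I = rep_endo g" by (rule abs_eq_iff) (simp add: endo_stdr)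
      have e2: "AE (QQ ?f I) = h \<longleftrightarrow> QQ ?f I = rep_endo h"
        by (rule abs_eq_iff) (simp add: endo_stdr finite_ideal[OF I])
      show ?thesis using e1 e2 by auto
    qed
    then show ?thesis by auto
  qed
  finally show "(efDelta x p :: 'k) = Dv ?f p" unfolding efDelta_def p by simp
qed

lemma finite_supp_Dv: "finite (supp (Dv f :: _ \<Rightarrow> 'k::field))"
  unfolding Dv_def by (rule finite_supp_sum[OF finite_Id finite_supp_bvec])

lemma endo_PP: "is_endo (PP f I)" by (simp add: endo_stdr)
lemma endo_QQ: "is_ideal f I \<Longrightarrow> is_endo (QQ f I)" by (simp add: endo_stdr finite_ideal)

lemma lext_Dv:
  "lext M (Dv f :: _ \<Rightarrow> 'k::field) y = (\<Sum>I\<in>Id f. M (AE (PP f I), AE (QQ f I)) y)"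
  unfolding Dv_def by (simp add: lext_sum[OF finite_Id finite_supp_bvec] lext_bvec)


lemma bvec_pair: "(bvec (u, v) (a, b) :: 'k::field) = bvec u a * bvec v b"
  by (simp add: bvec_def)

lemma efone_apply: "(efone x :: 'k::field) = of_bool (x = E0)"
  by (simp add: efone_def bvec_def)

lemma rep_eq_Nil: "rep_endo x = [] \<longleftrightarrow> x = E0"
  by (metis rep_E0 rep_endo_inverse)

lemma Dv_rep_abs: "is_endo L \<Longrightarrow> efDelta (AE L) = Dv L"
  by (simp add: efDelta_eq rep_abs)

lemma AE_eq_E0: "is_endo L \<Longrightarrow> AE L = E0 \<longleftrightarrow> L = []"
  using abs_eq_iff rep_E0 by metis

lemma Id_Nil: "Id [] = {{}}"
  by (auto simp: is_ideal_def)

lemma sum_ideal_delta: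
  fixes g :: "nat set \<Rightarrow> 'k::field"
  assumes "is_ideal f I0"
  shows "(\<Sum>I\<in>Id f. of_bool (I = I0) * g I) = g I0"
proof -
  have "(\<Sum>I\<in>Id f. of_bool (I = I0) * g I) = (\<Sum>I\<in>Id f \<inter> {I. I = I0}. g I)"
    by (rule sum_of_bool_mult_eq[OF finite_Id])
  also have "Id f \<inter> {I. I = I0} = {I0}" using assms by auto
  finally show ?thesis by simp
qed

section \<open>Bialgebra axioms\<close>

lemma ax_assoc: "lext efmu (tens (efmu (x, y)) (bvec z)) = (lext efmu (tens (bvec x) (efmu (y, z))) :: endo \<Rightarrow> 'k::field)"
  by (simp add: efmu_pair tens_bvec lext_bvec mon_assoc)

lemma ax_unit: "lext efmu (tens efone (bvec x)) = (bvec x :: endo \<Rightarrow> 'k::field) \<and>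
    lext efmu (tens (bvec x) efone) = (bvec x :: endo \<Rightarrow> 'k)"
  by (simp add: efone_def efmu_pair tens_bvec lext_bvec)

lemma ax_coassoc:
  "lext (tmat efDelta bvec) (efDelta x) =
     (\<lambda>((a, b), c). lext (tmat bvec efDelta) (efDelta x) (a, (b, c)) :: 'k::field)"
proof
  fix q :: "(endo \<times> endo) \<times> endo"
  obtain a b c where q: "q = ((a, b), c)" by (metis prod.exhaust)
  let ?f = "rep_endo x"
  define F where "F p1 p2 p3 = (bvec (AE p1) a * bvec (AE p2) b * bvec (AE p3) c :: 'k)" for p1 p2 p3
  have L: "lext (tmat efDelta bvec) (efDelta x) ((a, b), c) =
     (\<Sum>I\<in>Id ?f. \<Sum>J\<in>Id (PP ?f I). F (PP (PP ?f I) J) (QQ (PP ?f I) J) (QQ ?f I))"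
  proof -
    have "lext (tmat efDelta bvec) (efDelta x) ((a, b), c) =
        (\<Sum>I\<in>Id ?f. tmat efDelta bvec (AE (PP ?f I), AE (QQ ?f I)) ((a, b), c))"
      by (simp add: efDelta_eq lext_Dv)
    also have "\<dots> = (\<Sum>I\<in>Id ?f. \<Sum>J\<in>Id (PP ?f I). F (PP (PP ?f I) J) (QQ (PP ?f I) J) (QQ ?f I))"
    proof (rule sum.cong[OF refl])
      fix I
      have "tmat efDelta bvec (AE (PP ?f I), AE (QQ ?f I)) ((a, b), c) =
          Dv (PP ?f I) (a, b) * bvec (AE (QQ ?f I)) c"
        by (simp add: tmat_def tens_def Dv_rep_abs endo_stdr)
      also have "\<dots> = (\<Sum>J\<in>Id (PP ?f I). F (PP (PP ?f I) J) (QQ (PP ?f I) J) (QQ ?f I))"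
        by (simp add: Dv_def F_def bvec_pair sum_distrib_right)
      finally show "tmat efDelta bvec (AE (PP ?f I), AE (QQ ?f I)) ((a, b), c) =
          (\<Sum>J\<in>Id (PP ?f I). F (PP (PP ?f I) J) (QQ (PP ?f I) J) (QQ ?f I))" .
    qed
    finally show ?thesis .
  qed
  have R: "lext (tmat bvec efDelta) (efDelta x) (a, (b, c)) =
     (\<Sum>I\<in>Id ?f. \<Sum>J\<in>Id (QQ ?f I). F (PP ?f I) (PP (QQ ?f I) J) (QQ (QQ ?f I) J))"
  proof -
    have "lext (tmat bvec efDelta) (efDelta x) (a, (b, c)) =
        (\<Sum>I\<in>Id ?f. tmat bvec efDelta (AE (PP ?f I), AE (QQ ?f I)) (a, (b, c)))"
      by (simp add: efDelta_eq lext_Dv)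
    also have "\<dots> = (\<Sum>I\<in>Id ?f. \<Sum>J\<in>Id (QQ ?f I). F (PP ?f I) (PP (QQ ?f I) J) (QQ (QQ ?f I) J))"
    proof (rule sum.cong[OF refl])
      fix I assume I: "I \<in> Id ?f"
      have "tmat bvec efDelta (AE (PP ?f I), AE (QQ ?f I)) (a, (b, c)) =
          bvec (AE (PP ?f I)) a * Dv (QQ ?f I) (b, c)"
        using I by (simp add: tmat_def tens_def Dv_rep_abs endo_QQ)
      also have "\<dots> = (\<Sum>J\<in>Id (QQ ?f I). F (PP ?f I) (PP (QQ ?f I) J) (QQ (QQ ?f I) J))"
        by (simp add: Dv_def F_def bvec_pair sum_distrib_left mult.assoc)
      finally show "tmat bvec efDelta (AE (PP ?f I), AE (QQ ?f I)) (a, (b, c)) =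
          (\<Sum>J\<in>Id (QQ ?f I). F (PP ?f I) (PP (QQ ?f I) J) (QQ (QQ ?f I) J))" .
    qed
    finally show ?thesis .
  qed
  show "lext (tmat efDelta bvec) (efDelta x) q =
     (\<lambda>((a, b), c). lext (tmat bvec efDelta) (efDelta x) (a, (b, c)) :: 'k) q"
  proof -
    have "lext (tmat efDelta bvec) (efDelta x) ((a, b), c) = (lext (tmat bvec efDelta) (efDelta x) (a, (b, c)) :: 'k)"
    proof -
      note L
      also have "(\<Sum>I\<in>Id ?f. \<Sum>J\<in>Id (PP ?f I). F (PP (PP ?f I) J) (QQ (PP ?f I) J) (QQ ?f I))
         = (\<Sum>I\<in>Id ?f. \<Sum>J\<in>Id (QQ ?f I). F (PP ?f I) (PP (QQ ?f I) J) (QQ (QQ ?f I) J))"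
        by (rule coassoc_sum)
      also note R[symmetric]
      finally show ?thesis .
    qed
    then show ?thesis using q by simp
  qed
qed

lemma ax_counit:
  "lext (\<lambda>(a, b). (\<lambda>y. efone a * bvec b y)) (efDelta x) = (bvec x :: endo \<Rightarrow> 'k::field) \<and>
   lext (\<lambda>(a, b). (\<lambda>y. bvec a y * efone b)) (efDelta x) = (bvec x :: endo \<Rightarrow> 'k)"
proof (intro conjI ext)
  fix y
  let ?f = "rep_endo x"
  have ef: "is_endo ?f" by (rule endo_rep)
  have "lext (\<lambda>(a, b). (\<lambda>y. efone a * bvec b y)) (efDelta x) y =
      (\<Sum>I\<in>Id ?f. efone (AE (PP ?f I)) * bvec (AE (QQ ?f I)) y :: 'k)"
    by (simp add: efDelta_eq lext_Dv)
  also have "\<dots> = (\<Sum>I\<in>Id ?f. of_bool (I = NN ?f) * bvec (AE (QQ ?f I)) y)"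
  proof (rule sum.cong[OF refl])
    fix I assume I: "I \<in> Id ?f"
    have "efone (AE (PP ?f I)) = (of_bool (I = NN ?f) :: 'k)"
      using AE_eq_E0[OF endo_PP] PP_Nil_iff I by (simp add: efone_apply)
    then show "efone (AE (PP ?f I)) * bvec (AE (QQ ?f I)) y = of_bool (I = NN ?f) * (bvec (AE (QQ ?f I)) y :: 'k)"
      by simp
  qed
  also have "\<dots> = bvec (AE (QQ ?f (NN ?f))) y" by (rule sum_ideal_delta[OF ideal_full])
  also have "\<dots> = bvec x y" using QQ_full[OF ef] by (simp add: rep_endo_inverse)
  finally show "lext (\<lambda>(a, b). (\<lambda>y. efone a * bvec b y)) (efDelta x) y = (bvec x y :: 'k)" .
next
  fix y
  let ?f = "rep_endo x"
  have ef: "is_endo ?f" by (rule endo_rep)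
  have "lext (\<lambda>(a, b). (\<lambda>y. bvec a y * efone b)) (efDelta x) y =
      (\<Sum>I\<in>Id ?f. bvec (AE (PP ?f I)) y * efone (AE (QQ ?f I)) :: 'k)"
    by (simp add: efDelta_eq lext_Dv)
  also have "\<dots> = (\<Sum>I\<in>Id ?f. of_bool (I = {}) * bvec (AE (PP ?f I)) y)"
  proof (rule sum.cong[OF refl])
    fix I assume I: "I \<in> Id ?f"
    have "efone (AE (QQ ?f I)) = (of_bool (I = {}) :: 'k)"
      using AE_eq_E0[OF endo_QQ] QQ_Nil_iff I by (simp add: efone_apply)
    then show "bvec (AE (PP ?f I)) y * efone (AE (QQ ?f I)) = of_bool (I = {}) * (bvec (AE (PP ?f I)) y :: 'k)"
      by simp
  qed
  also have "\<dots> = bvec (AE (PP ?f {})) y" by (rule sum_ideal_delta[OF ideal_empty])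
  also have "\<dots> = bvec x y" using PP_empty[OF ef] by (simp add: rep_endo_inverse)
  finally show "lext (\<lambda>(a, b). (\<lambda>y. bvec a y * efone b)) (efDelta x) y = (bvec x y :: 'k)" .
qed

lemma ax_mult:
  "lext efDelta (efmu (x, y)) =
   (lext (\<lambda>((a1, a2), (b1, b2)). tens (efmu (a1, b1)) (efmu (a2, b2))) (tens (efDelta x) (efDelta y))
     :: endo \<times> endo \<Rightarrow> 'k::field)"
proof
  fix z :: "endo \<times> endo"
  let ?f = "rep_endo x" and ?g = "rep_endo y"
  have ef: "is_endo ?f" and eg: "is_endo ?g" by (rule endo_rep)+
  define M where "M = (\<lambda>((a1, a2), (b1, b2)). tens (efmu (a1, b1)) (efmu (a2, b2)) :: endo \<times> endo \<Rightarrow> 'k)"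
  define G where "G p q = (bvec (AE p, AE q) z :: 'k)" for p q
  have "lext efDelta (efmu (x, y)) z = (Dv (shcat ?f ?g) z :: 'k)"
    by (simp add: efmu_pair lext_bvec efDelta_eq rep_mon)
  also have "\<dots> = (\<Sum>K\<in>Id (shcat ?f ?g). G (PP (shcat ?f ?g) K) (QQ (shcat ?f ?g) K))"
    by (simp add: Dv_def G_def)
  also have "\<dots> = (\<Sum>I\<in>Id ?f. \<Sum>J\<in>Id ?g. G (shcat (PP ?f I) (PP ?g J)) (shcat (QQ ?f I) (QQ ?g J)))"
    by (rule mult_sum[OF ef eg])
  also have "\<dots> = lext M (tens (efDelta x) (efDelta y)) z"
  proof -
    have t: "tens (efDelta x) (efDelta y) = (\<lambda>p. \<Sum>I\<in>Id ?f. \<Sum>J\<in>Id ?g.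
       (bvec ((AE (PP ?f I), AE (QQ ?f I)), (AE (PP ?g J), AE (QQ ?g J))) p :: 'k))"
      by (simp add: efDelta_eq Dv_def tens_sum_left tens_sum_right tens_bvec)
    have fin: "\<And>I. finite (supp (\<lambda>p. \<Sum>J\<in>Id ?g.
       (bvec ((AE (PP ?f I), AE (QQ ?f I)), (AE (PP ?g J), AE (QQ ?g J))) p :: 'k)))"
      by (rule finite_supp_sum[OF finite_Id finite_supp_bvec])
    have "lext M (tens (efDelta x) (efDelta y)) z = (\<Sum>I\<in>Id ?f. \<Sum>J\<in>Id ?g.
       M ((AE (PP ?f I), AE (QQ ?f I)), (AE (PP ?g J), AE (QQ ?g J))) z)"
      unfolding t
    proof -
      have "lext M (\<lambda>p. \<Sum>I\<in>Id ?f. \<Sum>J\<in>Id ?g.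
       (bvec ((AE (PP ?f I), AE (QQ ?f I)), (AE (PP ?g J), AE (QQ ?g J))) p :: 'k)) z
       = (\<Sum>I\<in>Id ?f. lext M (\<lambda>p. \<Sum>J\<in>Id ?g.
       (bvec ((AE (PP ?f I), AE (QQ ?f I)), (AE (PP ?g J), AE (QQ ?g J))) p :: 'k)) z)"
        by (rule lext_sum[OF finite_Id fin])
      also have "\<dots> = (\<Sum>I\<in>Id ?f. \<Sum>J\<in>Id ?g. lext M
       (bvec ((AE (PP ?f I), AE (QQ ?f I)), (AE (PP ?g J), AE (QQ ?g J))) :: _ \<Rightarrow> 'k) z)"
        by (rule sum.cong[OF refl], rule lext_sum[OF finite_Id finite_supp_bvec])
      finally show "lext M (\<lambda>p. \<Sum>I\<in>Id ?f. \<Sum>J\<in>Id ?g.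
       (bvec ((AE (PP ?f I), AE (QQ ?f I)), (AE (PP ?g J), AE (QQ ?g J))) p :: 'k)) z = (\<Sum>I\<in>Id ?f. \<Sum>J\<in>Id ?g.
       M ((AE (PP ?f I), AE (QQ ?f I)), (AE (PP ?g J), AE (QQ ?g J))) z)" by (simp only: lext_bvec)
    qed
    also have "\<dots> = (\<Sum>I\<in>Id ?f. \<Sum>J\<in>Id ?g. G (shcat (PP ?f I) (PP ?g J)) (shcat (QQ ?f I) (QQ ?g J)))"
    proof (intro sum.cong refl)
      fix I J assume I: "I \<in> Id ?f" and J: "J \<in> Id ?g"
      show "M ((AE (PP ?f I), AE (QQ ?f I)), (AE (PP ?g J), AE (QQ ?g J))) z =
          G (shcat (PP ?f I) (PP ?g J)) (shcat (QQ ?f I) (QQ ?g J))"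
        using I J by (simp add: M_def G_def efmu_pair tens_bvec mon_abs endo_stdr endo_QQ)
    qed
    finally show ?thesis by simp
  qed
  finally show "lext efDelta (efmu (x, y)) z = lext M (tens (efDelta x) (efDelta y)) z" .
qed

lemma ax_Delta_one: "lext efDelta efone = (tens efone efone :: endo \<times> endo \<Rightarrow> 'k::field)"
proof -
  have "lext efDelta efone = (Dv [] :: endo \<times> endo \<Rightarrow> 'k)"
    by (simp add: efone_def lext_bvec Dv_rep_abs endo_Nil)
  also have "\<dots> = bvec (E0, E0)"
    by (simp add: Dv_def Id_Nil stdr_empty)
  also have "\<dots> = tens efone efone" by (simp add: efone_def tens_bvec)
  finally show ?thesis .
qed

lemma mon_eq_E0: "mon x y = E0 \<longleftrightarrow> x = E0 \<and> y = E0"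
  by (metis rep_eq_Nil rep_mon shcat_eq_Nil)

lemma ax_eps_mult: "lfun efone (efmu (x, y)) = (efone x * efone y :: 'k::field)"
  by (simp add: efmu_pair lfun_bvec efone_apply mon_eq_E0)

lemma ax_eps_one: "lfun efone efone = (1 :: 'k::field)"
  by (simp only: efone_def lfun_bvec) (simp add: bvec_def)

lemma efdeg_mon: "efdeg (mon x y) = efdeg x + efdeg y"
  by (simp add: efdeg_def rep_mon)

lemma graded: "graded_sc efdeg efmu (efone :: endo \<Rightarrow> 'k::field) efDelta efone"
  unfolding graded_sc_def
proof (intro conjI allI impI)
  fix x y
  show "supp (efmu (x, y) :: endo \<Rightarrow> 'k) \<subseteq> {z. efdeg z = efdeg x + efdeg y}"
    by (simp add: efmu_pair supp_bvec efdeg_mon)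
next
  show "supp (efone :: endo \<Rightarrow> 'k) \<subseteq> {z. efdeg z = 0}"
    by (simp add: efone_def supp_bvec efdeg_def rep_E0)
next
  fix x
  show "supp (efDelta x :: endo \<times> endo \<Rightarrow> 'k) \<subseteq> {(a, b). efdeg a + efdeg b = efdeg x}"
  proof
    fix p assume p: "p \<in> supp (efDelta x :: endo \<times> endo \<Rightarrow> 'k)"
    obtain a b where ab: "p = (a, b)" by (cases p)
    let ?f = "rep_endo x"
    let ?S = "{I. is_ideal ?f I \<and> stdr ?f (NN ?f - I) = rep_endo a \<and> stdr ?f I = rep_endo b}"
    have "(of_nat (card ?S) :: 'k) \<noteq> 0" using p ab by (simp add: supp_def efDelta_def)
    then have "card ?S \<noteq> 0" by (metis of_nat_0)
    then have "?S \<noteq> {}" by (metis card.empty)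
    then obtain I where "I \<in> ?S" by blast
    then have I: "is_ideal ?f I" "PP ?f I = rep_endo a" "QQ ?f I = rep_endo b" by auto
    have "card I \<le> length ?f"
      using ideal_sub[OF I(1)] by (metis card_atLeastAtMost card_mono diff_Suc_1 finite_atLeastAtMost)
    then have "efdeg a + efdeg b = efdeg x"
      using length_PP[OF I(1)] length_QQ[OF I(1)] I by (simp add: efdeg_def)
    then show "p \<in> {(a, b). efdeg a + efdeg b = efdeg x}" using ab by simp
  qed
next
  fix x assume "(efone x :: 'k) \<noteq> 0"
  then have "x = E0" by (simp add: efone_apply)
  then show "efdeg x = 0" by (simp add: efdeg_def rep_E0)
qed


lemma card_PP_less: "is_ideal f I \<Longrightarrow> I \<noteq> {} \<Longrightarrow> length (PP f I) < length f"
proof -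
  assume I: "is_ideal f I" "I \<noteq> {}"
  have "card I > 0" using I finite_ideal by (simp add: card_gt_0_iff)
  moreover have "card I \<le> length f"
    using ideal_sub[OF I(1)] by (metis card_atLeastAtMost card_mono diff_Suc_1 finite_atLeastAtMost)
  ultimately show ?thesis using length_PP[OF I(1)] by simp
qed

lemma card_QQ_less: "is_ideal f I \<Longrightarrow> I \<noteq> NN f \<Longrightarrow> length (QQ f I) < length f"
proof -
  assume I: "is_ideal f I" "I \<noteq> NN f"
  have "I \<subset> NN f" using ideal_sub[OF I(1)] I(2) by auto
  then have "card I < card (NN f)" by (rule psubset_card_mono[OF finite_atLeastAtMost])
  moreover have "card (NN f) = length f" by simp
  ultimately show ?thesis using length_QQ[OF I(1)] by simp
qed

lemma card_PP_less': "is_ideal f I \<Longrightarrow> I \<noteq> {} \<Longrightarrow> length (stdr f ({Suc 0..length f} - I)) < length f"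
  using card_PP_less by (metis One_nat_def)

lemma card_QQ_less': "is_ideal f I \<Longrightarrow> I \<noteq> {Suc 0..length f} \<Longrightarrow> length (QQ f I) < length f"
  using card_QQ_less by (metis One_nat_def)

function Sl :: "nat list \<Rightarrow> endo \<Rightarrow> 'k::field" where
  "Sl f = (if f = [] then efone else
     (\<lambda>y. - (\<Sum>I\<in>{I. is_ideal f I \<and> I \<noteq> {}}. vmul (Sl (PP f I)) (bvec (AE (QQ f I))) y)))"
  by pat_completeness auto
termination
  by (relation "measure length") (auto simp: card_PP_less card_PP_less')

function Sr :: "nat list \<Rightarrow> endo \<Rightarrow> 'k::field" where
  "Sr f = (if f = [] then efone else
     (\<lambda>y. - (\<Sum>I\<in>{I. is_ideal f I \<and> I \<noteq> NN f}. vmul (bvec (AE (PP f I))) (Sr (QQ f I)) y)))"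
  by pat_completeness auto
termination
  by (relation "measure length") (auto simp: card_QQ_less card_QQ_less')

declare Sl.simps[simp del] Sr.simps[simp del]

lemma finite_supp_neg: "finite (supp g) \<Longrightarrow> finite (supp (\<lambda>y. - g y :: 'k::field))"
  by (simp add: supp_def)

lemma finite_Id_sub: "finite {I. is_ideal f I \<and> P I}"
  using finite_Id by (rule finite_subset[rotated]) auto

lemma finite_supp_Sl: "finite (supp (Sl f :: endo \<Rightarrow> 'k::field))"
proof (induction f rule: Sl.induct)
  case (1 f)
  show ?case
  proof (cases "f = []")
    case True then show ?thesis by (simp add: Sl.simps efone_def finite_supp_bvec)
  next
    case False
    have "finite (supp (\<lambda>y. \<Sum>I\<in>{I. is_ideal f I \<and> I \<noteq> {}}. vmul (Sl (PP f I) :: endo \<Rightarrow> 'k) (bvec (AE (QQ f I))) y))"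
    proof (rule finite_supp_sum[OF finite_Id_sub])
      fix I assume I: "I \<in> {I. is_ideal f I \<and> I \<noteq> {}}"
      show "finite (supp (vmul (Sl (PP f I) :: endo \<Rightarrow> 'k) (bvec (AE (QQ f I)))))"
        using finite_supp_vmul[OF "1"[OF False I] finite_supp_bvec] .
    qed
    then show ?thesis using False by (subst Sl.simps) (simp add: finite_supp_neg)
  qed
qed

lemma finite_supp_Sr: "finite (supp (Sr f :: endo \<Rightarrow> 'k::field))"
proof (induction f rule: Sr.induct)
  case (1 f)
  show ?case
  proof (cases "f = []")
    case True then show ?thesis by (simp add: Sr.simps efone_def finite_supp_bvec)
  next
    case False
    have "finite (supp (\<lambda>y. \<Sum>I\<in>{I. is_ideal f I \<and> I \<noteq> NN f}. vmul (bvec (AE (PP f I))) (Sr (QQ f I) :: endo \<Rightarrow> 'k) y))"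
    proof (rule finite_supp_sum[OF finite_Id_sub])
      fix I assume I: "I \<in> {I. is_ideal f I \<and> I \<noteq> NN f}"
      show "finite (supp (vmul (bvec (AE (PP f I))) (Sr (QQ f I) :: endo \<Rightarrow> 'k)))"
        using finite_supp_vmul[OF finite_supp_bvec "1"[OF False I]] .
    qed
    then show ?thesis using False by (subst Sr.simps) (simp add: finite_supp_neg)
  qed
qed

lemma Id_remove: "x \<in> Id f \<Longrightarrow> {I. is_ideal f I \<and> I \<noteq> x} = Id f - {x}"
  by auto

lemma Sl_left:
  assumes ef: "is_endo f"
  shows "(\<Sum>I\<in>Id f. vmul (Sl (PP f I)) (bvec (AE (QQ f I))) y) = of_bool (f = []) * (efone y :: 'k::field)"
proof (cases "f = []")
  case True
  have "(\<Sum>I\<in>Id f. vmul (Sl (PP f I)) (bvec (AE (QQ f I))) y) = vmul (Sl [] :: endo \<Rightarrow> 'k) efone y"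
    using True by (simp add: Id_Nil stdr_empty efone_def)
  also have "\<dots> = efone y" by (simp add: Sl.simps efone_def vmul_bvec)
  finally show ?thesis using True by simp
next
  case False
  let ?g = "\<lambda>I. vmul (Sl (PP f I) :: endo \<Rightarrow> 'k) (bvec (AE (QQ f I))) y"
  have "(\<Sum>I\<in>Id f. ?g I) = ?g {} + (\<Sum>I\<in>Id f - {{}}. ?g I)"
    by (rule sum.remove[OF finite_Id]) (simp only: mem_Collect_eq ideal_empty)
  also have "?g {} = Sl f y"
  proof -
    have "?g {} = vmul (Sl f :: endo \<Rightarrow> 'k) efone y" by (simp only: PP_empty[OF ef] QQ_empty efone_def)
    also have "vmul (Sl f :: endo \<Rightarrow> 'k) efone = Sl f" by (rule vmul_one_right[OF finite_supp_Sl])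
    finally show ?thesis .
  qed
  also have "Sl f y = - (\<Sum>I\<in>Id f - {{}}. ?g I)"
    using False Id_remove[of "{}" f] ideal_empty by (subst Sl.simps) simp
  finally show ?thesis using False by simp
qed

lemma Sr_right:
  assumes ef: "is_endo f"
  shows "(\<Sum>I\<in>Id f. vmul (bvec (AE (PP f I))) (Sr (QQ f I)) y) = of_bool (f = []) * (efone y :: 'k::field)"
proof (cases "f = []")
  case True
  have "(\<Sum>I\<in>Id f. vmul (bvec (AE (PP f I))) (Sr (QQ f I)) y) = vmul efone (Sr [] :: endo \<Rightarrow> 'k) y"
    using True by (simp add: Id_Nil stdr_empty efone_def)
  also have "\<dots> = efone y" by (simp add: Sr.simps efone_def vmul_bvec)
  finally show ?thesis using True by simp
next
  case False
  let ?g = "\<lambda>I. vmul (bvec (AE (PP f I))) (Sr (QQ f I) :: endo \<Rightarrow> 'k) y"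
  have "(\<Sum>I\<in>Id f. ?g I) = ?g (NN f) + (\<Sum>I\<in>Id f - {NN f}. ?g I)"
    by (rule sum.remove[OF finite_Id]) (simp only: mem_Collect_eq ideal_full)
  also have "?g (NN f) = Sr f y"
  proof -
    have "?g (NN f) = vmul efone (Sr f :: endo \<Rightarrow> 'k) y" by (simp only: PP_full QQ_full[OF ef] efone_def)
    also have "vmul efone (Sr f :: endo \<Rightarrow> 'k) = Sr f" by (rule vmul_one_left[OF finite_supp_Sr])
    finally show ?thesis .
  qed
  also have "Sr f y = - (\<Sum>I\<in>Id f - {NN f}. ?g I)"
    using False Id_remove[of "NN f" f] ideal_full by (subst Sr.simps) simp
  finally show ?thesis using False by simp
qed

lemma vmul_scale_right:
  fixes u v :: "endo \<Rightarrow> 'k::field"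
  assumes "finite (supp u)" "finite (supp v)"
  shows "vmul u (\<lambda>z. c * v z) y = c * vmul u v y"
  using vmul_lin_right[of "{()}" "\<lambda>_. v" u "\<lambda>_. c" y] assms by simp

lemma vmul_scale_left:
  fixes u v :: "endo \<Rightarrow> 'k::field"
  assumes "finite (supp u)" "finite (supp v)"
  shows "vmul (\<lambda>z. c * u z) v y = c * vmul u v y"
  using vmul_lin_left[of "{()}" "\<lambda>_. u" v "\<lambda>_. c" y] assms by simp

lemma Sl_Sr:
  assumes ef: "is_endo f"
  shows "Sl f = (Sr f :: endo \<Rightarrow> 'k::field)"
proof
  fix y
  define F where "F p1 p2 p3 = vmul (vmul (Sl p1 :: endo \<Rightarrow> 'k) (bvec (AE p2))) (Sr p3) y" for p1 p2 p3
  have fb: "\<And>a. finite (supp (bvec a :: endo \<Rightarrow> 'k))" by (rule finite_supp_bvec)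
  have fl: "\<And>g. finite (supp (Sl g :: endo \<Rightarrow> 'k))" by (rule finite_supp_Sl)
  have fr: "\<And>g. finite (supp (Sr g :: endo \<Rightarrow> 'k))" by (rule finite_supp_Sr)
  have A: "(\<Sum>I\<in>Id f. \<Sum>J\<in>Id (QQ f I). F (PP f I) (PP (QQ f I) J) (QQ (QQ f I) J)) = Sl f y"
  proof -
    have "(\<Sum>I\<in>Id f. \<Sum>J\<in>Id (QQ f I). F (PP f I) (PP (QQ f I) J) (QQ (QQ f I) J))
        = (\<Sum>I\<in>Id f. of_bool (I = {}) * Sl (PP f I) y)"
    proof (rule sum.cong[OF refl])
      fix I assume I: "I \<in> Id f"
      have eq: "is_endo (QQ f I)" using I by (simp add: endo_QQ)
      have "(\<Sum>J\<in>Id (QQ f I). F (PP f I) (PP (QQ f I) J) (QQ (QQ f I) J))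
          = (\<Sum>J\<in>Id (QQ f I). vmul (Sl (PP f I)) (vmul (bvec (AE (PP (QQ f I) J))) (Sr (QQ (QQ f I) J))) y)"
        by (simp add: F_def vmul_assoc[OF fl fb fr])
      also have "\<dots> = vmul (Sl (PP f I)) (\<lambda>z. \<Sum>J\<in>Id (QQ f I). vmul (bvec (AE (PP (QQ f I) J))) (Sr (QQ (QQ f I) J)) z) y"
        by (rule vmul_sum_right[symmetric]) (use finite_Id finite_supp_vmul[OF fb fr] fl in auto)
      also have "(\<lambda>z. \<Sum>J\<in>Id (QQ f I). vmul (bvec (AE (PP (QQ f I) J))) (Sr (QQ (QQ f I) J) :: endo \<Rightarrow> 'k) z)
          = (\<lambda>z. of_bool (QQ f I = []) * efone z)"
        using Sr_right[OF eq] by blast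
      also have "vmul (Sl (PP f I) :: endo \<Rightarrow> 'k) (\<lambda>z. of_bool (QQ f I = []) * efone z) y
          = of_bool (QQ f I = []) * vmul (Sl (PP f I)) efone y"
        by (rule vmul_scale_right[OF fl]) (simp add: efone_def finite_supp_bvec)
      also have "\<dots> = of_bool (I = {}) * Sl (PP f I) y"
        using QQ_Nil_iff I vmul_one_right[OF fl] by simp
      finally show "(\<Sum>J\<in>Id (QQ f I). F (PP f I) (PP (QQ f I) J) (QQ (QQ f I) J)) = of_bool (I = {}) * Sl (PP f I) y" .
    qed
    also have "\<dots> = Sl (PP f {}) y" by (rule sum_ideal_delta[OF ideal_empty])
    also have "\<dots> = Sl f y" by (simp only: PP_empty[OF ef])
    finally show ?thesis .
  qed
  have B: "(\<Sum>I\<in>Id f. \<Sum>J\<in>Id (PP f I). F (PP (PP f I) J) (QQ (PP f I) J) (QQ f I)) = Sr f y"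
  proof -
    have "(\<Sum>I\<in>Id f. \<Sum>J\<in>Id (PP f I). F (PP (PP f I) J) (QQ (PP f I) J) (QQ f I))
        = (\<Sum>I\<in>Id f. of_bool (I = NN f) * Sr (QQ f I) y)"
    proof (rule sum.cong[OF refl])
      fix I assume I: "I \<in> Id f"
      have ep: "is_endo (PP f I)" by (simp add: endo_stdr)
      have "(\<Sum>J\<in>Id (PP f I). F (PP (PP f I) J) (QQ (PP f I) J) (QQ f I))
          = vmul (\<lambda>z. \<Sum>J\<in>Id (PP f I). vmul (Sl (PP (PP f I) J)) (bvec (AE (QQ (PP f I) J))) z) (Sr (QQ f I)) y"
        unfolding F_def
        by (rule vmul_sum_left[symmetric]) (use finite_Id finite_supp_vmul[OF fl fb] fr in auto)
      also have "(\<lambda>z. \<Sum>J\<in>Id (PP f I). vmul (Sl (PP (PP f I) J) :: endo \<Rightarrow> 'k) (bvec (AE (QQ (PP f I) J))) z)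
          = (\<lambda>z. of_bool (PP f I = []) * efone z)"
        using Sl_left[OF ep] by blast
      also have "vmul (\<lambda>z. of_bool (PP f I = []) * efone z) (Sr (QQ f I) :: endo \<Rightarrow> 'k) y
          = of_bool (PP f I = []) * vmul efone (Sr (QQ f I)) y"
        by (rule vmul_scale_left[OF _ fr]) (simp add: efone_def finite_supp_bvec)
      also have "\<dots> = of_bool (I = NN f) * Sr (QQ f I) y"
        using PP_Nil_iff I vmul_one_left[OF fr] by simp
      finally show "(\<Sum>J\<in>Id (PP f I). F (PP (PP f I) J) (QQ (PP f I) J) (QQ f I)) = of_bool (I = NN f) * Sr (QQ f I) y" .
    qed
    also have "\<dots> = Sr (QQ f (NN f)) y" by (rule sum_ideal_delta[OF ideal_full])
    also have "\<dots> = Sr f y" by (simp only: QQ_full[OF ef])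
    finally show ?thesis .
  qed
  show "Sl f y = (Sr f y :: 'k)" using A B coassoc_sum[of F f] by simp
qed

definition Santi :: "endo \<Rightarrow> endo \<Rightarrow> 'k::field" where
  "Santi x = Sl (rep_endo x)"

lemma ax_antipode:
  "lext efmu (lext (tmat Santi bvec) (efDelta x)) = (\<lambda>y. efone x * (efone y :: 'k::field)) \<and>
   lext efmu (lext (tmat bvec Santi) (efDelta x)) = (\<lambda>y. efone x * (efone y :: 'k))"
proof (intro conjI ext)
  fix y
  let ?f = "rep_endo x"
  have ef: "is_endo ?f" by (rule endo_rep)
  have fb: "\<And>a. finite (supp (bvec a :: endo \<Rightarrow> 'k))" by (rule finite_supp_bvec)
  have fl: "\<And>g. finite (supp (Sl g :: endo \<Rightarrow> 'k))" by (rule finite_supp_Sl)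
  have ex: "(efone x :: 'k) = of_bool (?f = [])" by (simp add: efone_apply rep_eq_Nil)
  have t: "lext (tmat Santi bvec) (efDelta x) = (\<lambda>p. \<Sum>I\<in>Id ?f. tens (Sl (PP ?f I) :: endo \<Rightarrow> 'k) (bvec (AE (QQ ?f I))) p)"
    by (rule ext) (simp add: efDelta_eq lext_Dv tmat_def Santi_def rep_abs endo_stdr)
  have "lext efmu (lext (tmat Santi bvec) (efDelta x)) y
      = (\<Sum>I\<in>Id ?f. lext efmu (tens (Sl (PP ?f I) :: endo \<Rightarrow> 'k) (bvec (AE (QQ ?f I)))) y)"
    unfolding t by (rule lext_sum[OF finite_Id finite_supp_tens[OF fl fb]])
  also have "\<dots> = (\<Sum>I\<in>Id ?f. vmul (Sl (PP ?f I) :: endo \<Rightarrow> 'k) (bvec (AE (QQ ?f I))) y)"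
    by (simp add: vmul_def)
  also have "\<dots> = of_bool (?f = []) * efone y" by (rule Sl_left[OF ef])
  also have "\<dots> = efone x * efone y" using ex by simp
  finally show "lext efmu (lext (tmat Santi bvec) (efDelta x)) y = efone x * (efone y :: 'k)" .
next
  fix y
  let ?f = "rep_endo x"
  have ef: "is_endo ?f" by (rule endo_rep)
  have fb: "\<And>a. finite (supp (bvec a :: endo \<Rightarrow> 'k))" by (rule finite_supp_bvec)
  have fl: "\<And>g. finite (supp (Sl g :: endo \<Rightarrow> 'k))" by (rule finite_supp_Sl)
  have ex: "(efone x :: 'k) = of_bool (?f = [])" by (simp add: efone_apply rep_eq_Nil)
  have t: "lext (tmat bvec Santi) (efDelta x) = (\<lambda>p. \<Sum>I\<in>Id ?f. tens (bvec (AE (PP ?f I))) (Sl (QQ ?f I) :: endo \<Rightarrow> 'k) p)"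
  proof (rule ext)
    fix p
    show "lext (tmat bvec Santi) (efDelta x) p = (\<Sum>I\<in>Id ?f. tens (bvec (AE (PP ?f I))) (Sl (QQ ?f I) :: endo \<Rightarrow> 'k) p)"
      unfolding efDelta_eq lext_Dv
      by (rule sum.cong[OF refl]) (simp add: tmat_def Santi_def rep_abs endo_QQ)
  qed
  have "lext efmu (lext (tmat bvec Santi) (efDelta x)) y
      = (\<Sum>I\<in>Id ?f. lext efmu (tens (bvec (AE (PP ?f I))) (Sl (QQ ?f I) :: endo \<Rightarrow> 'k)) y)"
    unfolding t by (rule lext_sum[OF finite_Id finite_supp_tens[OF fb fl]])
  also have "\<dots> = (\<Sum>I\<in>Id ?f. vmul (bvec (AE (PP ?f I))) (Sr (QQ ?f I) :: endo \<Rightarrow> 'k) y)"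
    by (rule sum.cong[OF refl]) (simp add: vmul_def Sl_Sr endo_QQ)
  also have "\<dots> = of_bool (?f = []) * efone y" by (rule Sr_right[OF ef])
  also have "\<dots> = efone x * efone y" using ex by simp
  finally show "lext efmu (lext (tmat bvec Santi) (efDelta x)) y = efone x * (efone y :: 'k)" .
qed

theorem hopf_main: "hopf_sc efmu (efone :: endo \<Rightarrow> 'k::field) efDelta efone Santi"
  unfolding hopf_sc_def
proof (intro conjI allI)
  fix p show "finite (supp (efmu p :: endo \<Rightarrow> 'k))" by (rule finite_supp_efmu)
next
  show "finite (supp (efone :: endo \<Rightarrow> 'k))" by (simp add: efone_def finite_supp_bvec)
next
  fix x show "finite (supp (efDelta x :: _ \<Rightarrow> 'k))" by (simp add: efDelta_eq finite_supp_Dv)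
next
  fix x show "finite (supp (Santi x :: endo \<Rightarrow> 'k))" by (simp add: Santi_def finite_supp_Sl)
next
  fix x y z show "lext efmu (tens (efmu (x, y)) (bvec z)) = (lext efmu (tens (bvec x) (efmu (y, z))) :: endo \<Rightarrow> 'k)"
    by (rule ax_assoc)
next
  fix x show "lext efmu (tens efone (bvec x)) = (bvec x :: endo \<Rightarrow> 'k)" using ax_unit by blast
next
  fix x show "lext efmu (tens (bvec x) efone) = (bvec x :: endo \<Rightarrow> 'k)" using ax_unit by blast
next
  fix x show "lext (tmat efDelta bvec) (efDelta x) =
     (\<lambda>((a, b), c). lext (tmat bvec efDelta) (efDelta x) (a, (b, c)) :: 'k)" by (rule ax_coassoc)
next
  fix x show "lext (\<lambda>(a, b). (\<lambda>y. efone a * bvec b y)) (efDelta x) = (bvec x :: endo \<Rightarrow> 'k)"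
    using ax_counit by blast
next
  fix x show "lext (\<lambda>(a, b). (\<lambda>y. bvec a y * efone b)) (efDelta x) = (bvec x :: endo \<Rightarrow> 'k)"
    using ax_counit by blast
next
  fix x y show "lext efDelta (efmu (x, y)) =
   (lext (\<lambda>((a1, a2), (b1, b2)). tens (efmu (a1, b1)) (efmu (a2, b2))) (tens (efDelta x) (efDelta y))
     :: endo \<times> endo \<Rightarrow> 'k)" by (rule ax_mult)
next
  show "lext efDelta efone = (tens efone efone :: endo \<times> endo \<Rightarrow> 'k)" by (rule ax_Delta_one)
next
  fix x y show "lfun efone (efmu (x, y)) = (efone x * efone y :: 'k)" by (rule ax_eps_mult)
next
  show "lfun efone efone = (1 :: 'k)" by (rule ax_eps_one)
next
  fix x show "lext efmu (lext (tmat Santi bvec) (efDelta x)) = (\<lambda>y. efone x * (efone y :: 'k))"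
    using ax_antipode by blast
next
  fix x show "lext efmu (lext (tmat bvec Santi) (efDelta x)) = (\<lambda>y. efone x * (efone y :: 'k))"
    using ax_antipode by blast
qed


lemma t1: "stdr [1,1,1] {2,3} = [1,2]" by code_simp
lemma t1b: "stdr [1,1,1] ({1..length [1,1,1::nat]} - {2,3}) = [1]" by code_simp
lemma t1c: "stdr [1,1,1] ({1..length [1,1,1::nat]} - {2}) = [1,1]" by code_simp
lemma t1d: "stdr [1,1,1] ({1..length [1,1,1::nat]} - {3}) = [1,1]" by code_simp
lemma t1e: "is_ideal [1,1,1] {2,3}" by code_simp

lemma e3: "{1..length [1,1,1::nat]} = {1,2,3}" by code_simp

lemma ideal111: 
  assumes "is_ideal [1,1,1] I" "1 \<in> I"
  shows "I = {1,2,3}"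
proof -
  have s: "I \<subseteq> {1,2,3}" using ideal_sub[OF assms(1)] by auto
  have a: "\<forall>j\<in>{1..3}. ap [1,1,1] j = 1" by (auto simp: ap_def nth_Cons split: nat.split)
  have "\<forall>j\<in>{1..3::nat}. j \<in> I" using assms a unfolding is_ideal_def by auto
  then have "{1,2,3} \<subseteq> I" by auto
  then show ?thesis using s by auto
qed

lemma card_ideal_stdr: "is_ideal f I \<Longrightarrow> card I = length (stdr f I)"
  using length_stdr finite_ideal by metis

lemma S2: "{I. is_ideal [1,1,1] I \<and> stdr [1,1,1] ({1..length [1,1,1::nat]} - I) = [1] \<and> stdr [1,1,1] I = [1,2]} = {{2,3}}"
proof
  show "{{2,3}} \<subseteq> {I. is_ideal [1,1,1] I \<and> stdr [1,1,1] ({1..length [1,1,1::nat]} - I) = [1] \<and> stdr [1,1,1] I = [1,2]}"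
    using t1 t1b t1e by simp
next
  show "{I. is_ideal [1,1,1] I \<and> stdr [1,1,1] ({1..length [1,1,1::nat]} - I) = [1] \<and> stdr [1,1,1] I = [1,2]} \<subseteq> {{2,3}}"
  proof
    fix I assume "I \<in> {I. is_ideal [1,1,1] I \<and> stdr [1,1,1] ({1..length [1,1,1::nat]} - I) = [1] \<and> stdr [1,1,1] I = [1,2]}"
    then have I: "is_ideal [1,1,1] I" "stdr [1,1,1] I = [1,2]" by auto
    have c: "card I = 2" using card_ideal_stdr[OF I(1)] I(2) by simp
    have n1: "1 \<notin> I"
    proof
      assume "1 \<in> I" then have "I = {1,2,3}" using ideal111 I by blast
      then show False using c by simp
    qed
    have s: "I \<subseteq> {2,3}" using ideal_sub[OF I(1)] n1 unfolding e3 by auto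
    have "I = {2,3}" using card_subset_eq[OF _ s] c by simp
    then show "I \<in> {{2,3}}" by simp
  qed
qed

lemma S3: "{I. is_ideal [1,1,1] I \<and> stdr [1,1,1] ({1..length [1,1,1::nat]} - I) = [1,2] \<and> stdr [1,1,1] I = [1]} = {}"
proof -
  have "False" if I: "is_ideal [1,1,1] I" "stdr [1,1,1] ({1..length [1,1,1::nat]} - I) = [1,2]" "stdr [1,1,1] I = [1]" for I
  proof -
    have c: "card I = 1" using card_ideal_stdr[OF I(1)] I(3) by simp
    have n1: "1 \<notin> I"
    proof
      assume "1 \<in> I" then have "I = {1,2,3}" using ideal111 I by blast
      then show False using c by simp
    qed
    have s: "I \<subseteq> {2,3}" using ideal_sub[OF I(1)] n1 unfolding e3 by auto
    obtain x where x: "I = {x}" using c card_1_singletonE by blast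
    then have "x = 2 \<or> x = 3" using s by auto
    then show False using I(2) x t1c t1d by auto
  qed
  then show ?thesis by blast
qed

lemma endo_lit: "is_endo [1]" "is_endo [1,2]" "is_endo [1,1,1]" by code_simp+

lemma noncocomm: "\<exists>x. (efDelta x :: endo \<times> endo \<Rightarrow> 'k::field) \<noteq> (\<lambda>(a, b). efDelta x (b, a))"
proof
  let ?x = "AE [1,1,1]"
  have r: "rep_endo (AE [1]) = [1]" "rep_endo (AE [1,2]) = [1,2]" "rep_endo ?x = [1,1,1]"
    using rep_abs endo_lit by auto
  have d1: "(efDelta ?x (AE [1], AE [1,2]) :: 'k) = 1"
    unfolding efDelta_def using r S2 by simp
  have d2: "(efDelta ?x (AE [1,2], AE [1]) :: 'k) = 0"
    by (simp only: efDelta_def prod.case r S3 card.empty of_nat_0)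
  show "(efDelta ?x :: endo \<times> endo \<Rightarrow> 'k) \<noteq> (\<lambda>(a, b). efDelta ?x (b, a))"
  proof
    assume "(efDelta ?x :: endo \<times> endo \<Rightarrow> 'k) = (\<lambda>(a, b). efDelta ?x (b, a))"
    then have "(efDelta ?x (AE [1,2], AE [1]) :: 'k) = efDelta ?x (AE [1], AE [1,2])"
      by (metis (mono_tags, lifting) case_prod_conv)
    then show False using d1 d2 by simp
  qed
qed


lemma SA_len: "Sgen valid prec f x \<noteq> (0::'k::field) \<Longrightarrow> length x = length f"
  by (simp add: Sgen_def compat_def split: if_splits)

lemma SA_Nil: "(SA [] :: letter list \<Rightarrow> 'k::field) = series_one"
proof
  fix w :: "letter list"
  show "(SA [] w :: 'k) = series_one w"
    by (cases w) (auto simp: Sgen_def compat_def series_one_def)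
qed

lemma split_range: "{1..n+m} = {1..n} \<union> (\<lambda>j. j + n) ` {1..(m::nat)}"
proof
  show "{1..n+m} \<subseteq> {1..n} \<union> (\<lambda>j. j + n) ` {1..m}"
  proof
    fix j assume j: "j \<in> {1..n+m}"
    show "j \<in> {1..n} \<union> (\<lambda>j. j + n) ` {1..m}"
    proof (cases "j \<le> n")
      case True then show ?thesis using j by auto
    next
      case False
      then have "j = (j - n) + n" "j - n \<in> {1..m}" using j by auto
      then show ?thesis by (metis UnI2 image_eqI)
    qed
  qed
qed auto

lemma compat_shcat:
  assumes ef: "is_endo f" and eg: "is_endo g" and len: "length w = length f + length g"
  shows "compat prec (shcat f g) w \<longleftrightarrow>
    compat prec f (take (length f) w) \<and> compat prec g (drop (length f) w)"
proof -
  let ?n = "length f" and ?m = "length g"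
  define P where "P j = (ap (shcat f g) j \<noteq> j \<longrightarrow> prec (w ! (ap (shcat f g) j - 1)) (w ! (j - 1)))" for j
  have "compat prec (shcat f g) w \<longleftrightarrow> (\<forall>j\<in>{1..?n+?m}. P j)"
    using len by (simp add: compat_def P_def)
  also have "\<dots> \<longleftrightarrow> (\<forall>j\<in>{1..?n}. P j) \<and> (\<forall>j\<in>{1..?m}. P (j + ?n))"
    unfolding split_range by blast
  also have "(\<forall>j\<in>{1..?n}. P j) \<longleftrightarrow> compat prec f (take ?n w)"
  proof -
    have "P j = (ap f j \<noteq> j \<longrightarrow> prec (take ?n w ! (ap f j - 1)) (take ?n w ! (j - 1)))"
      if j: "j \<in> {1..?n}" for j
    proof -
      have a: "ap (shcat f g) j = ap f j" using ap_shcat[of j f g] j by auto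
      have b: "ap f j \<in> {1..?n}" using ef j by (simp add: is_endo_ap)
      show ?thesis unfolding P_def a using b j by auto
    qed
    then show ?thesis using len by (simp add: compat_def)
  qed
  also have "(\<forall>j\<in>{1..?m}. P (j + ?n)) \<longleftrightarrow> compat prec g (drop ?n w)"
  proof -
    have "P (j + ?n) = (ap g j \<noteq> j \<longrightarrow> prec (drop ?n w ! (ap g j - 1)) (drop ?n w ! (j - 1)))"
      if j: "j \<in> {1..?m}" for j
    proof -
      have a: "ap (shcat f g) (j + ?n) = ap g j + ?n" using ap_shcat[of "j + ?n" f g] j by auto
      have b: "ap g j \<in> {1..?m}" using eg j by (simp add: is_endo_ap)
      have c1: "w ! (ap g j + ?n - 1) = drop ?n w ! (ap g j - 1)" using b len by (simp add: add.commute)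
      have c2: "w ! (j + ?n - 1) = drop ?n w ! (j - 1)" using j len by (simp add: add.commute)
      show ?thesis unfolding P_def a c1 c2 by auto
    qed
    then show ?thesis using len by (simp add: compat_def)
  qed
  finally show ?thesis .
qed

lemma SA_shcat:
  assumes ef: "is_endo f" and eg: "is_endo g" and len: "length w = length f + length g"
  shows "(Sgen valid prec (shcat f g) w :: 'k::field) =
    Sgen valid prec f (take (length f) w) * Sgen valid prec g (drop (length f) w)"
proof -
  have v: "(\<forall>x\<in>set w. valid x) \<longleftrightarrow> (\<forall>x\<in>set (take (length f) w). valid x) \<and> (\<forall>x\<in>set (drop (length f) w). valid x)"
  proof -
    have "set (take (length f) w @ drop (length f) w) = set (take (length f) w) \<union> set (drop (length f) w)"
      by (rule set_append)
    then have "set w = set (take (length f) w) \<union> set (drop (length f) w)" by simp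
    then show ?thesis by blast
  qed
  show ?thesis using compat_shcat[OF ef eg len, of prec] v by (simp add: Sgen_def)
qed

lemma series_mult_SA:
  assumes ef: "is_endo f" and eg: "is_endo g"
  shows "series_mult (Sgen valid prec f) (Sgen valid prec g) = (Sgen valid prec (shcat f g) :: _ \<Rightarrow> 'k::field)"
proof
  fix w
  let ?n = "length f" and ?m = "length g"
  have "series_mult (Sgen valid prec f) (Sgen valid prec g) w =
     (\<Sum>k\<le>length w. if k = ?n then (Sgen valid prec f (take ?n w) * Sgen valid prec g (drop ?n w) :: 'k) else 0)"
    unfolding series_mult_def
  proof (rule sum.cong[OF refl])
    fix k assume k: "k \<in> {..length w}"
    show "(Sgen valid prec f (take k w) * Sgen valid prec g (drop k w) :: 'k) =
       (if k = ?n then Sgen valid prec f (take ?n w) * Sgen valid prec g (drop ?n w) else 0)"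
    proof (cases "k = ?n")
      case False
      then have "length (take k w) \<noteq> ?n" using k by simp
      then have "(Sgen valid prec f (take k w) :: 'k) = 0" using SA_len by blast
      then show ?thesis using False by simp
    qed simp
  qed
  also have "\<dots> = (if ?n \<le> length w then Sgen valid prec f (take ?n w) * Sgen valid prec g (drop ?n w) else 0)"
    by simp
  also have "\<dots> = Sgen valid prec (shcat f g) w"
  proof (cases "length w = ?n + ?m")
    case True
    then show ?thesis by (simp add: SA_shcat[OF ef eg True])
  next
    case False
    have r: "(Sgen valid prec (shcat f g) w :: 'k) = 0" using SA_len[of valid prec "shcat f g" w] False by auto
    show ?thesis
    proof (cases "?n \<le> length w")
      case True
      then have "length (drop ?n w) \<noteq> ?m" using False by simp
      then have "(Sgen valid prec g (drop ?n w) :: 'k) = 0" using SA_len by blast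
      then show ?thesis using r by simp
    qed (use r in simp)
  qed
  finally show "series_mult (Sgen valid prec f) (Sgen valid prec g) w = (Sgen valid prec (shcat f g) w :: 'k)" .
qed

lemma series_one_EFSym: "(series_one :: letter list \<Rightarrow> 'k::field) \<in> EFSym"
proof -
  define c where "c = (\<lambda>f::nat list. if f = [] then (1::'k) else 0)"
  have s: "{f. c f \<noteq> 0} = {[]}" by (auto simp: c_def)
  have eq: "(series_one :: letter list \<Rightarrow> 'k) = (\<lambda>w. \<Sum>f\<in>{f. c f \<noteq> 0}. c f * (SA f w :: 'k))"
  proof -
    have "(\<lambda>w. \<Sum>f\<in>{[]}. c f * (SA f w :: 'k)) = SA []" by (simp add: c_def)
    then show ?thesis unfolding s SA_Nil by simp
  qed
  have en: "\<forall>f. c f \<noteq> 0 \<longrightarrow> is_endo f" by (simp add: c_def endo_Nil)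
  have fin: "finite {f. c f \<noteq> 0}" using s by simp
  show ?thesis unfolding EFSym_def mem_Collect_eq
    by (intro exI[of _ c] conjI) (fact fin, fact en, fact eq)
qed

lemma series_mult_lin:
  fixes c d :: "nat list \<Rightarrow> 'k::field"
  shows "series_mult (\<lambda>w. \<Sum>f\<in>A. c f * (SA f w :: 'k)) (\<lambda>w. \<Sum>g\<in>B. d g * SA g w) =
     (\<lambda>w. \<Sum>f\<in>A. \<Sum>g\<in>B. c f * d g * series_mult (SA f) (SA g) w)"
proof
  fix w
  show "series_mult (\<lambda>w. \<Sum>f\<in>A. c f * (SA f w :: 'k)) (\<lambda>w. \<Sum>g\<in>B. d g * SA g w) w =
     (\<Sum>f\<in>A. \<Sum>g\<in>B. c f * d g * series_mult (SA f) (SA g) w)"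
  proof -
    have "series_mult (\<lambda>w. \<Sum>f\<in>A. c f * (SA f w :: 'k)) (\<lambda>w. \<Sum>g\<in>B. d g * SA g w) w
       = (\<Sum>k\<le>length w. (\<Sum>f\<in>A. c f * (SA f (take k w) :: 'k)) * (\<Sum>g\<in>B. d g * SA g (drop k w)))"
      by (simp add: series_mult_def)
    also have "\<dots> = (\<Sum>k\<le>length w. \<Sum>f\<in>A. \<Sum>g\<in>B. c f * d g * (SA f (take k w) * SA g (drop k w)))"
      by (simp add: sum_product mult_ac)
    also have "\<dots> = (\<Sum>f\<in>A. \<Sum>k\<le>length w. \<Sum>g\<in>B. c f * d g * (SA f (take k w) * SA g (drop k w)))"
      by (rule sum.swap)
    also have "\<dots> = (\<Sum>f\<in>A. \<Sum>g\<in>B. \<Sum>k\<le>length w. c f * d g * (SA f (take k w) * SA g (drop k w)))"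
      by (rule sum.cong[OF refl], rule sum.swap)
    also have "\<dots> = (\<Sum>f\<in>A. \<Sum>g\<in>B. c f * d g * series_mult (SA f) (SA g) w)"
      by (simp add: series_mult_def sum_distrib_left)
    finally show ?thesis .
  qed
qed

lemma EFSym_mult:
  assumes F: "F \<in> (EFSym :: (letter list \<Rightarrow> 'k::field) set)" and G: "G \<in> EFSym"
  shows "series_mult F G \<in> EFSym"
proof -
  obtain c :: "nat list \<Rightarrow> 'k" where c: "finite {f. c f \<noteq> 0}" "\<forall>f. c f \<noteq> 0 \<longrightarrow> is_endo f"
    "F = (\<lambda>w. \<Sum>f\<in>{f. c f \<noteq> 0}. c f * SA f w)" using F unfolding EFSym_def by blast
  obtain d :: "nat list \<Rightarrow> 'k" where d: "finite {f. d f \<noteq> 0}" "\<forall>f. d f \<noteq> 0 \<longrightarrow> is_endo f"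
    "G = (\<lambda>w. \<Sum>f\<in>{f. d f \<noteq> 0}. d f * SA f w)" using G unfolding EFSym_def by blast
  let ?A = "{f. c f \<noteq> 0}" and ?B = "{f. d f \<noteq> 0}"
  let ?sh = "\<lambda>p. shcat (fst p) (snd p)"
  let ?H = "?sh ` (?A \<times> ?B)"
  define e where "e h = (\<Sum>p\<in>{p\<in>?A \<times> ?B. ?sh p = h}. c (fst p) * d (snd p))" for h
  have finAB: "finite (?A \<times> ?B)" using c(1) d(1) by simp
  have finH: "finite ?H" using finAB by simp
  have eH: "{h. e h \<noteq> 0} \<subseteq> ?H"
  proof
    fix h assume "h \<in> {h. e h \<noteq> 0}"
    then have eh: "e h \<noteq> 0" by simp
    have "{p\<in>?A \<times> ?B. ?sh p = h} \<noteq> {}"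
    proof
      assume E: "{p\<in>?A \<times> ?B. ?sh p = h} = {}"
      have "e h = 0" unfolding e_def E by (rule sum.empty)
      then show False using eh by simp
    qed
    then show "h \<in> ?H" by blast
  qed
  have "series_mult F G = (\<lambda>w. \<Sum>f\<in>?A. \<Sum>g\<in>?B. c f * d g * series_mult (SA f) (SA g) w)"
    unfolding c(3) d(3) by (rule series_mult_lin)
  also have "\<dots> = (\<lambda>w. \<Sum>p\<in>?A \<times> ?B. c (fst p) * d (snd p) * SA (?sh p) w)"
  proof
    fix w
    have "(\<Sum>f\<in>?A. \<Sum>g\<in>?B. c f * d g * series_mult (SA f) (SA g) w) =
        (\<Sum>f\<in>?A. \<Sum>g\<in>?B. c f * d g * (SA (shcat f g) w :: 'k))"
      using c(2) d(2) by (intro sum.cong refl) (auto simp: series_mult_SA)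
    also have "\<dots> = (\<Sum>p\<in>?A \<times> ?B. c (fst p) * d (snd p) * SA (?sh p) w)"
      by (simp add: sum.cartesian_product case_prod_beta)
    finally show "(\<Sum>f\<in>?A. \<Sum>g\<in>?B. c f * d g * series_mult (SA f) (SA g) w) =
        (\<Sum>p\<in>?A \<times> ?B. c (fst p) * d (snd p) * SA (?sh p) w)" .
  qed
  also have "\<dots> = (\<lambda>w. \<Sum>h\<in>{h. e h \<noteq> 0}. e h * SA h w)"
  proof
    fix w
    have "(\<Sum>p\<in>?A \<times> ?B. c (fst p) * d (snd p) * (SA (?sh p) w :: 'k)) =
        (\<Sum>h\<in>?H. \<Sum>p\<in>{p\<in>?A \<times> ?B. ?sh p = h}. c (fst p) * d (snd p) * SA (?sh p) w)"
      by (rule sum.image_gen[OF finAB])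
    also have "\<dots> = (\<Sum>h\<in>?H. e h * SA h w)"
      unfolding e_def by (intro sum.cong refl) (simp add: sum_distrib_right)
    also have "\<dots> = (\<Sum>h\<in>{h. e h \<noteq> 0}. e h * SA h w)"
      by (rule sum.mono_neutral_right[OF finH eH]) auto
    finally show "(\<Sum>p\<in>?A \<times> ?B. c (fst p) * d (snd p) * (SA (?sh p) w :: 'k)) = (\<Sum>h\<in>{h. e h \<noteq> 0}. e h * SA h w)" .
  qed
  finally have eq: "series_mult F G = (\<lambda>w. \<Sum>h\<in>{h. e h \<noteq> 0}. e h * SA h w)" .
  have fin: "finite {h. e h \<noteq> 0}" using finite_subset[OF eH finH] .
  have en: "\<forall>h. e h \<noteq> 0 \<longrightarrow> is_endo h"
  proof (intro allI impI)
    fix h assume "e h \<noteq> 0"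
    then have "h \<in> ?H" using eH by blast
    then obtain p where "p \<in> ?A \<times> ?B" "h = ?sh p" by blast
    then show "is_endo h" using c(2) d(2) endo_shcat by auto
  qed
  show ?thesis unfolding EFSym_def mem_Collect_eq
    by (intro exI[of _ e] conjI) (fact fin, fact en, fact eq)
qed


definition xf :: "nat list \<Rightarrow> nat \<Rightarrow> nat" where
  "xf f j = (if ap f j \<noteq> j then ap f j else length f + 1)"

definition wwf :: "nat list \<Rightarrow> letter list" where
  "wwf f = map (\<lambda>i. (xf f (Suc i), Suc i)) [0..<length f]"

definition nf :: "nat list \<Rightarrow> nat set" where
  "nf f = {j\<in>{1..length f}. ap f j \<noteq> j}"

lemma wwf_nth: "j \<in> {1..length f} \<Longrightarrow> wwf f ! (j - 1) = (xf f j, j)"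
  by (auto simp: wwf_def)

lemma length_wwf[simp]: "length (wwf f) = length f" by (simp add: wwf_def)

lemma SA_wwf_self:
  assumes ef: "is_endo f"
  shows "(SA f (wwf f) :: 'k::field) = 1"
proof -
  have ran: "\<And>j. j \<in> {1..length f} \<Longrightarrow> ap f j \<in> {1..length f}" using ef by (simp add: is_endo_ap)
  have v: "\<forall>x\<in>set (wwf f). validA x"
  proof
    fix x assume "x \<in> set (wwf f)"
    then obtain i where i: "i < length f" "x = (xf f (Suc i), Suc i)" by (auto simp: wwf_def)
    have "Suc i \<in> {1..length f}" using i by simp
    then show "validA x" using i ran[of "Suc i"] by (auto simp: validA_def xf_def)
  qed
  have c: "compat precA f (wwf f)"
    unfolding compat_def
  proof (intro conjI ballI impI)
    show "length (wwf f) = length f" by simp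
  next
    fix j assume j: "j \<in> {1..length f}" and ne: "ap f j \<noteq> j"
    have "wwf f ! (ap f j - 1) = (xf f (ap f j), ap f j)" using wwf_nth[OF ran[OF j]] .
    moreover have "wwf f ! (j - 1) = (xf f j, j)" using wwf_nth[OF j] .
    ultimately show "precA (wwf f ! (ap f j - 1)) (wwf f ! (j - 1))" using ne by (simp add: precA_def xf_def)
  qed
  show ?thesis using v c by (simp add: Sgen_def)
qed

lemma SA_wwf_other:
  assumes ef: "is_endo f" and eg: "is_endo g" and nz: "(SA g (wwf f) :: 'k::field) \<noteq> 0"
  shows "length g = length f" "\<And>j. j \<in> {1..length f} \<Longrightarrow> ap g j \<noteq> j \<Longrightarrow> ap g j = ap f j \<and> ap f j \<noteq> j"
proof -
  have c: "compat precA g (wwf f)" using nz by (simp add: Sgen_def split: if_splits)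
  then show l: "length g = length f" by (simp add: compat_def)
  fix j assume j: "j \<in> {1..length f}" and ne: "ap g j \<noteq> j"
  have a: "ap g j \<in> {1..length f}" using eg j l by (simp add: is_endo_ap)
  have "precA (wwf f ! (ap g j - 1)) (wwf f ! (j - 1))" using c j ne l by (simp add: compat_def)
  then have "ap g j = xf f j" using wwf_nth[OF a] wwf_nth[OF j] by (simp add: precA_def)
  then show "ap g j = ap f j \<and> ap f j \<noteq> j" using a by (auto simp: xf_def split: if_splits)
qed

lemma list_eq_ap: "length g = length f \<Longrightarrow> (\<forall>j\<in>{1..length f}. ap g j = ap f j) \<Longrightarrow> g = f"
proof (rule nth_equalityI)
  fix i assume l: "length g = length f" and h: "\<forall>j\<in>{1..length f}. ap g j = ap f j" and i: "i < length g"
  have "ap g (Suc i) = ap f (Suc i)" using h i l by simp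
  then show "g ! i = f ! i" by (simp add: ap_def)
qed

lemma nf_less:
  assumes ef: "is_endo f" and eg: "is_endo g" and nz: "(SA g (wwf f) :: 'k::field) \<noteq> 0" and ne: "g \<noteq> f"
  shows "card (nf g) < card (nf f)"
proof -
  note o = SA_wwf_other[OF ef eg nz]
  have sub: "nf g \<subseteq> nf f" using o by (auto simp: nf_def)
  have "nf g \<noteq> nf f"
  proof
    assume eq: "nf g = nf f"
    have "\<forall>j\<in>{1..length f}. ap g j = ap f j"
    proof
      fix j assume j: "j \<in> {1..length f}"
      show "ap g j = ap f j"
      proof (cases "ap g j = j")
        case True
        then have "j \<notin> nf g" by (simp add: nf_def)
        then have "j \<notin> nf f" using eq by simp
        then show ?thesis using True j by (simp add: nf_def)
      next
        case False then show ?thesis using o(2)[OF j] by simp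
      qed
    qed
    then have "g = f" using list_eq_ap o(1) by blast
    then show False using ne by simp
  qed
  then have "nf g \<subset> nf f" using sub by auto
  moreover have "finite (nf f)" by (simp add: nf_def)
  ultimately show ?thesis by (simp add: psubset_card_mono)
qed

theorem lin_indep:
  fixes F :: "nat list set" and c :: "nat list \<Rightarrow> 'k::field"
  assumes fin: "finite F" and en: "\<forall>f\<in>F. is_endo f" and z: "\<forall>w. (\<Sum>f\<in>F. c f * SA f w) = 0"
  shows "\<forall>f\<in>F. c f = 0"
proof (rule ccontr)
  assume "\<not> (\<forall>f\<in>F. c f = 0)"
  then obtain f1 where "f1 \<in> F" "c f1 \<noteq> 0" by blast
  then obtain f0 where f0: "f0 \<in> F \<and> c f0 \<noteq> 0" and mn: "\<forall>g. g \<in> F \<and> c g \<noteq> 0 \<longrightarrow> card (nf f0) \<le> card (nf g)"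
    using ex_has_least_nat[of "\<lambda>f. f \<in> F \<and> c f \<noteq> 0" f1 "\<lambda>f. card (nf f)"] by blast
  have ef0: "is_endo f0" using en f0 by blast
  have "(\<Sum>f\<in>F. c f * (SA f (wwf f0) :: 'k)) = c f0 * SA f0 (wwf f0) + (\<Sum>f\<in>F - {f0}. c f * SA f (wwf f0))"
    by (rule sum.remove[OF fin]) (use f0 in blast)
  also have "(\<Sum>f\<in>F - {f0}. c f * (SA f (wwf f0) :: 'k)) = 0"
  proof (rule sum.neutral, rule ballI)
    fix g assume g: "g \<in> F - {f0}"
    show "c g * (SA g (wwf f0) :: 'k) = 0"
    proof (rule ccontr)
      assume "c g * (SA g (wwf f0) :: 'k) \<noteq> 0"
      then have cg: "c g \<noteq> 0" and sg: "(SA g (wwf f0) :: 'k) \<noteq> 0" by auto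
      have "card (nf g) < card (nf f0)" using nf_less[OF ef0 _ sg] en g by auto
      moreover have "card (nf f0) \<le> card (nf g)" using mn g cg by auto
      ultimately show False by simp
    qed
  qed
  also have "(SA f0 (wwf f0) :: 'k) = 1" by (rule SA_wwf_self[OF ef0])
  finally have "(\<Sum>f\<in>F. c f * (SA f (wwf f0) :: 'k)) = c f0" by simp
  then show False using z f0 by simp
qed


section \<open>Transport of compatibility through standardization\<close>

lemma compat_std:
  assumes fin: "finite X" and len: "length x = card X"
    and W: "\<forall>j\<in>{1..card X}. x ! (j - 1) = W (en X j)"
  shows "compat prec (stdr f X) x \<longleftrightarrow> (\<forall>i\<in>X. restr f X i \<noteq> i \<longrightarrow> prec (W (restr f X i)) (W i))"
proof -
  let ?L = "stdr f X"
  let ?Q = "\<lambda>i. restr f X i \<noteq> i \<longrightarrow> prec (W (restr f X i)) (W i)"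
  have lenL: "length ?L = card X" by (rule length_stdr[OF fin])
  have "compat prec ?L x \<longleftrightarrow> (\<forall>j\<in>{1..card X}. ap ?L j \<noteq> j \<longrightarrow> prec (x ! (ap ?L j - 1)) (x ! (j - 1)))"
    using len lenL by (simp add: compat_def)
  also have "\<dots> \<longleftrightarrow> (\<forall>j\<in>{1..card X}. ?Q (en X j))"
  proof -
    have "(ap ?L j \<noteq> j \<longrightarrow> prec (x ! (ap ?L j - 1)) (x ! (j - 1))) = ?Q (en X j)" if j: "j \<in> {1..card X}" for j
    proof -
      have p: "ap ?L j \<in> {1..card X}" "en X (ap ?L j) = restr f X (en X j)" using std_props_en(2)[OF fin j] by auto
      have e1: "x ! (ap ?L j - 1) = W (restr f X (en X j))" using W p by metis
      have e2: "x ! (j - 1) = W (en X j)" using W j by blast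
      have e3: "(ap ?L j \<noteq> j) = (restr f X (en X j) \<noteq> en X j)" using en_inj_iff[OF fin p(1) j] p(2) by simp
      show ?thesis unfolding e1 e2 e3 ..
    qed
    then show ?thesis by auto
  qed
  also have "\<dots> \<longleftrightarrow> (\<forall>i\<in>en X ` {1..card X}. ?Q i)" by blast
  also have "\<dots> \<longleftrightarrow> (\<forall>i\<in>X. ?Q i)" using en_props(2)[OF fin] by simp
  finally show ?thesis .
qed

definition pos :: "('a \<Rightarrow> bool) \<Rightarrow> 'a list \<Rightarrow> nat set" where
  "pos P w = {i\<in>{1..length w}. P (w ! (i - 1))}"

lemma pos_sub: "pos P w \<subseteq> {1..length w}" by (auto simp: pos_def)
lemma finite_pos: "finite (pos P w)" using pos_sub finite_subset by blast

lemma pos_shift: "{i\<in>{1..m}. P (w ! (i - 1))} = Suc ` {j. j < m \<and> P (w ! j)}"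
proof
  show "{i\<in>{1..m}. P (w ! (i - 1))} \<subseteq> Suc ` {j. j < m \<and> P (w ! j)}"
  proof
    fix i assume i: "i \<in> {i\<in>{1..m}. P (w ! (i - 1))}"
    then have "i = Suc (i - 1)" "i - 1 < m" "P (w ! (i - 1))" by auto
    then show "i \<in> Suc ` {j. j < m \<and> P (w ! j)}" by blast
  qed
qed auto

lemma card_shift: "card {i\<in>{1..m}. P (w ! (i - 1))} = card {j. j < m \<and> P (w ! j)}"
  unfolding pos_shift by (simp add: card_image)

lemma card_pos: "card (pos P w) = length (filter P w)"
  unfolding pos_def card_shift by (simp add: length_filter_conv_card)

lemma filter_take_card: "i \<le> length w \<Longrightarrow> length (filter P (take i w)) = card {j. j < i \<and> P (w ! j)}"
proof -
  assume i: "i \<le> length w"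
  have "length (filter P (take i w)) = card {j. j < length (take i w) \<and> P (take i w ! j)}"
    by (rule length_filter_conv_card)
  also have "{j. j < length (take i w) \<and> P (take i w ! j)} = {j. j < i \<and> P (w ! j)}"
    using i by auto
  finally show ?thesis .
qed

lemma nth_filter_cnt: "i < length w \<Longrightarrow> P (w ! i) \<Longrightarrow> filter P w ! length (filter P (take i w)) = w ! i"
proof (induction w arbitrary: i)
  case Nil then show ?case by simp
next
  case (Cons x w)
  show ?case
  proof (cases i)
    case 0 then show ?thesis using Cons by simp
  next
    case (Suc k)
    then have "k < length w" "P (w ! k)" using Cons.prems by auto
    then show ?thesis using Cons.IH Suc by simp
  qed
qed

lemma rank_pos:
  assumes i: "i \<in> pos P w"
  shows "rank (pos P w) i = Suc (length (filter P (take (i - 1) w)))"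
proof -
  have i1: "1 \<le> i" "i \<le> length w" "P (w ! (i - 1))" using i by (auto simp: pos_def)
  have "{y \<in> pos P w. y \<le> i} = {k\<in>{1..i}. P (w ! (k - 1))}" using i1 by (auto simp: pos_def)
  then have "rank (pos P w) i = card {k\<in>{1..i}. P (w ! (k - 1))}" unfolding rank_def by simp
  also have "\<dots> = card {j. j < i \<and> P (w ! j)}" by (rule card_shift)
  also have "{j. j < i \<and> P (w ! j)} = insert (i - 1) {j. j < i - 1 \<and> P (w ! j)}" using i1 by auto
  also have "card \<dots> = Suc (card {j. j < i - 1 \<and> P (w ! j)})" by simp
  also have "card {j. j < i - 1 \<and> P (w ! j)} = length (filter P (take (i - 1) w))"
    using filter_take_card[of "i - 1" w P] i1 by simp
  finally show ?thesis .
qed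

lemma nth_pos:
  assumes i: "i \<in> pos P w"
  shows "filter P w ! (rank (pos P w) i - 1) = w ! (i - 1)"
  using rank_pos[OF i] nth_filter_cnt[of "i - 1" w P] i by (auto simp: pos_def)

lemma nth_pos_en:
  assumes j: "j \<in> {1..card (pos P w)}"
  shows "filter P w ! (j - 1) = w ! (en (pos P w) j - 1)"
proof -
  let ?X = "pos P w"
  have i: "en ?X j \<in> ?X" using en_in[OF finite_pos j] .
  have "rank ?X (en ?X j) = j" using rank_enum[OF en_props[OF finite_pos] j] .
  then show ?thesis using nth_pos[OF i] by simp
qed

section \<open>Projections and shuffles\<close>

definition pl :: "('a + 'b) list \<Rightarrow> 'a list" where "pl w = map projl (filter isl w)"
definition pr :: "('a + 'b) list \<Rightarrow> 'b list" where "pr w = map projr (filter (\<lambda>x. \<not> isl x) w)"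

lemma pl_simps[simp]: "pl [] = []" "pl (Inl a # w) = a # pl w" "pl (Inr b # w) = pl w"
  by (simp_all add: pl_def)
lemma pr_simps[simp]: "pr [] = []" "pr (Inl a # w) = pr w" "pr (Inr b # w) = b # pr w"
  by (simp_all add: pr_def)

lemma shuffles_iff: "w \<in> shuffles (map Inl u) (map Inr v) \<longleftrightarrow> pl w = u \<and> pr w = v"
proof (induction w arbitrary: u v)
  case Nil then show ?case by auto
next
  case (Cons x w)
  show ?case
  proof (cases x)
    case (Inl a)
    have "x # w \<in> shuffles (map Inl u) (map Inr v) \<longleftrightarrow> (u \<noteq> [] \<and> hd u = a \<and> w \<in> shuffles (map Inl (tl u)) (map Inr v))"
      using Inl by (auto simp: Cons_in_shuffles_iff map_tl hd_map)
    also have "\<dots> \<longleftrightarrow> (u \<noteq> [] \<and> hd u = a \<and> pl w = tl u \<and> pr w = v)" using Cons.IH by simp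
    also have "\<dots> \<longleftrightarrow> pl (x # w) = u \<and> pr (x # w) = v" using Inl by (cases u) auto
    finally show ?thesis .
  next
    case (Inr b)
    have "x # w \<in> shuffles (map Inl u) (map Inr v) \<longleftrightarrow> (v \<noteq> [] \<and> hd v = b \<and> w \<in> shuffles (map Inl u) (map Inr (tl v)))"
      using Inr by (auto simp: Cons_in_shuffles_iff map_tl hd_map)
    also have "\<dots> \<longleftrightarrow> (v \<noteq> [] \<and> hd v = b \<and> pl w = u \<and> pr w = tl v)" using Cons.IH by simp
    also have "\<dots> \<longleftrightarrow> pl (x # w) = u \<and> pr (x # w) = v" using Inr by (cases v) auto
    finally show ?thesis .
  qed
qed

fun mg :: "bool list \<Rightarrow> 'a list \<Rightarrow> 'b list \<Rightarrow> ('a + 'b) list" where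
  "mg [] u v = []"
| "mg (b # bs) u v = (if b then Inr (hd v) # mg bs u (tl v) else Inl (hd u) # mg bs (tl u) v)"

lemma mg_props:
  "length (filter id bs) = length v \<Longrightarrow> length (filter Not bs) = length u \<Longrightarrow>
   pl (mg bs u v) = u \<and> pr (mg bs u v) = v \<and> map (\<lambda>x. \<not> isl x) (mg bs u v) = bs"
proof (induction bs arbitrary: u v)
  case Nil then show ?case by simp
next
  case (Cons b bs)
  show ?case
  proof (cases b)
    case True
    then obtain y v' where v: "v = y # v'" using Cons.prems by (cases v) auto
    then show ?thesis using Cons True by simp
  next
    case False
    then obtain y u' where u: "u = y # u'" using Cons.prems by (cases u) auto
    then show ?thesis using Cons False by simp
  qed
qed

section \<open>Decomposition of SAB\<close>

lemma isl_cases: "isl x \<Longrightarrow> x = Inl (projl x)" "\<not> isl x \<Longrightarrow> x = Inr (projr x)"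
  by (cases x; simp)+

lemma validAB_iff: "(\<forall>x\<in>set w. validAB x) \<longleftrightarrow> (\<forall>x\<in>set (pl w). validA x) \<and> (\<forall>x\<in>set (pr w). validA x)"
proof (induction w)
  case Nil then show ?case by simp
next
  case (Cons x w) then show ?case by (cases x) auto
qed

lemma SAB_decomp:
  assumes ef: "is_endo f" and len: "length w = length f"
  shows "(SAB f w :: 'k::field) =
    (if is_ideal f (pos (\<lambda>x. \<not> isl x) w)
     then SA (PP f (pos (\<lambda>x. \<not> isl x) w)) (pl w) * SA (QQ f (pos (\<lambda>x. \<not> isl x) w)) (pr w) else 0)"
proof -
  let ?n = "length f"
  let ?R = "pos (\<lambda>x. \<not> isl x) w" and ?L = "pos isl w"
  have LR: "NN f - ?R = ?L" using len by (auto simp: pos_def)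
  have Rs: "?R \<subseteq> NN f" using pos_sub len by metis
  define WL where "WL i = projl (w ! (i - 1))" for i
  define WR where "WR i = projr (w ! (i - 1))" for i
  have cL: "compat prec (stdr f ?L) (pl w) \<longleftrightarrow> (\<forall>i\<in>?L. restr f ?L i \<noteq> i \<longrightarrow> prec (WL (restr f ?L i)) (WL i))" for prec
  proof (rule compat_std[OF finite_pos])
    show "length (pl w) = card ?L" by (simp add: pl_def card_pos)
    show "\<forall>j\<in>{1..card ?L}. pl w ! (j - 1) = WL (en ?L j)"
    proof
      fix j assume j: "j \<in> {1..card ?L}"
      have "j - 1 < length (filter isl w)" using j card_pos[of isl w] by auto
      then show "pl w ! (j - 1) = WL (en ?L j)" using nth_pos_en[OF j] by (simp add: pl_def WL_def)
    qed
  qed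
  have cR: "compat prec (stdr f ?R) (pr w) \<longleftrightarrow> (\<forall>i\<in>?R. restr f ?R i \<noteq> i \<longrightarrow> prec (WR (restr f ?R i)) (WR i))" for prec
  proof (rule compat_std[OF finite_pos])
    show "length (pr w) = card ?R" by (simp add: pr_def card_pos)
    show "\<forall>j\<in>{1..card ?R}. pr w ! (j - 1) = WR (en ?R j)"
    proof
      fix j assume j: "j \<in> {1..card ?R}"
      have "j - 1 < length (filter (\<lambda>x. \<not> isl x) w)" using j card_pos[of "\<lambda>x. \<not> isl x" w] by auto
      then show "pr w ! (j - 1) = WR (en ?R j)" using nth_pos_en[OF j] by (simp add: pr_def WR_def)
    qed
  qed
  define T where "T j = (ap f j \<noteq> j \<longrightarrow> precAB (w ! (ap f j - 1)) (w ! (j - 1)))" for j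
  define Lc where "Lc i = (restr f ?L i \<noteq> i \<longrightarrow> precA (WL (restr f ?L i)) (WL i))" for i
  define Rc where "Rc i = (restr f ?R i \<noteq> i \<longrightarrow> precA (WR (restr f ?R i)) (WR i))" for i
  have pt: "T j \<longleftrightarrow> (ap f j \<in> ?R \<longrightarrow> j \<in> ?R) \<and> (j \<in> ?L \<longrightarrow> Lc j) \<and> (j \<in> ?R \<longrightarrow> Rc j)"
    if j: "j \<in> NN f" for j
  proof -
    have a: "ap f j \<in> NN f" using ef j by (simp add: is_endo_ap)
    have jLR: "j \<in> ?L \<longleftrightarrow> j \<notin> ?R" "ap f j \<in> ?L \<longleftrightarrow> ap f j \<notin> ?R" using j a len by (auto simp: pos_def)
    have wj: "j \<in> ?L \<Longrightarrow> w ! (j - 1) = Inl (WL j)" "j \<in> ?R \<Longrightarrow> w ! (j - 1) = Inr (WR j)"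
      using isl_cases by (auto simp: pos_def WL_def WR_def)
    have wa: "ap f j \<in> ?L \<Longrightarrow> w ! (ap f j - 1) = Inl (WL (ap f j))" "ap f j \<in> ?R \<Longrightarrow> w ! (ap f j - 1) = Inr (WR (ap f j))"
      using isl_cases by (auto simp: pos_def WL_def WR_def)
    show ?thesis
    proof (cases "j \<in> ?R")
      case True
      have rR: "restr f ?R j = (if ap f j \<in> ?R then ap f j else j)" by (simp add: restr_def)
      show ?thesis
      proof (cases "ap f j \<in> ?R")
        case True2: True
        show ?thesis using True True2 jLR wj wa rR by (auto simp: T_def Rc_def)
      next
        case False2: False
        then have "ap f j \<in> ?L" using jLR by simp
        then show ?thesis using True False2 jLR wj wa rR by (auto simp: T_def Rc_def)
      qed
    next
      case False
      then have jL: "j \<in> ?L" using jLR by simp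
      have rL: "restr f ?L j = (if ap f j \<in> ?L then ap f j else j)" by (simp add: restr_def)
      show ?thesis
      proof (cases "ap f j \<in> ?R")
        case True2: True
        have ne: "ap f j \<noteq> j" using True2 False by auto
        show ?thesis using False True2 jLR wj wa rL ne by (auto simp: T_def Lc_def)
      next
        case False2: False
        then have "ap f j \<in> ?L" using jLR by simp
        then show ?thesis using False False2 jLR wj wa rL by (auto simp: T_def Lc_def)
      qed
    qed
  qed
  have "compat precAB f w \<longleftrightarrow> (\<forall>j\<in>NN f. T j)" using len by (simp add: compat_def T_def)
  also have "\<dots> \<longleftrightarrow> (\<forall>j\<in>NN f. ap f j \<in> ?R \<longrightarrow> j \<in> ?R) \<and> (\<forall>j\<in>?L. Lc j) \<and> (\<forall>j\<in>?R. Rc j)"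
  proof -
    have "?L \<subseteq> NN f" using pos_sub len by metis
    then show ?thesis using pt Rs by blast
  qed
  also have "\<dots> \<longleftrightarrow> is_ideal f ?R \<and> compat precA (PP f ?R) (pl w) \<and> compat precA (QQ f ?R) (pr w)"
    using cL[of precA] cR[of precA] Rs LR by (simp add: is_ideal_def Lc_def Rc_def)
  finally have cc: "compat precAB f w \<longleftrightarrow> is_ideal f ?R \<and> compat precA (PP f ?R) (pl w) \<and> compat precA (QQ f ?R) (pr w)" .
  show ?thesis using cc validAB_iff[of w] by (auto simp: Sgen_def)
qed


lemma rank_le_card: "finite X \<Longrightarrow> rank X i \<le> card X"
  unfolding rank_def by (rule card_mono) auto

lemma nth_via_proj:
  assumes i: "i < length w"
  shows "w ! i = (if isl (w ! i) then Inl (pl w ! (rank (pos isl w) (Suc i) - 1))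
                  else Inr (pr w ! (rank (pos (\<lambda>x. \<not> isl x) w) (Suc i) - 1)))"
proof (cases "isl (w ! i)")
  case True
  have p: "Suc i \<in> pos isl w" using i True by (simp add: pos_def)
  have k: "rank (pos isl w) (Suc i) - 1 < length (filter isl w)"
    using rank_pos[OF p] rank_le_card[OF finite_pos, of isl w "Suc i"] card_pos[of isl w] by simp
  have "filter isl w ! (rank (pos isl w) (Suc i) - 1) = w ! i" using nth_pos[OF p] by simp
  then show ?thesis using True k isl_cases(1)[OF True] by (simp add: pl_def)
next
  case False
  have p: "Suc i \<in> pos (\<lambda>x. \<not> isl x) w" using i False by (simp add: pos_def)
  have k: "rank (pos (\<lambda>x. \<not> isl x) w) (Suc i) - 1 < length (filter (\<lambda>x. \<not> isl x) w)"
    using rank_pos[OF p] rank_le_card[OF finite_pos, of "\<lambda>x. \<not> isl x" w "Suc i"] card_pos[of "\<lambda>x. \<not> isl x" w] by simp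
  have "filter (\<lambda>x. \<not> isl x) w ! (rank (pos (\<lambda>x. \<not> isl x) w) (Suc i) - 1) = w ! i" using nth_pos[OF p] by simp
  then show ?thesis using False k isl_cases(2)[OF False] by (simp add: pr_def)
qed

lemma pos_isl_compl: "pos isl w = {1..length w} - pos (\<lambda>x. \<not> isl x) w"
  by (auto simp: pos_def)

theorem shuffle_formula:
  assumes ef: "is_endo f"
  shows "(\<Sum>w\<in>shuffles (map Inl u) (map Inr v). (SAB f w :: 'k::field)) =
    (\<Sum>I\<in>{I. is_ideal f I}. SA (stdr f ({1..length f} - I)) u * SA (stdr f I) v)"
proof -
  let ?W = "shuffles (map Inl u) (map Inr v)"
  let ?n = "length f" and ?N = "length u + length v"
  let ?R = "\<lambda>w. pos (\<lambda>x. \<not> isl x) w"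
  define G where "G I = (SA (PP f I) u * SA (QQ f I) v :: 'k)" for I
  have Wp: "\<And>w. w \<in> ?W \<Longrightarrow> pl w = u \<and> pr w = v \<and> length w = ?N"
    using shuffles_iff length_shuffles by (metis length_map)
  show ?thesis
  proof (cases "?N = ?n")
    case False
    have "(\<Sum>w\<in>?W. (SAB f w :: 'k)) = 0"
    proof (rule sum.neutral, rule ballI)
      fix w assume "w \<in> ?W"
      then have "length w \<noteq> length f" using Wp False by auto
      then show "(SAB f w :: 'k) = 0" using SA_len by blast
    qed
    moreover have "(\<Sum>I\<in>{I. is_ideal f I}. SA (stdr f ({1..length f} - I)) u * (SA (stdr f I) v :: 'k)) = 0"
    proof (rule sum.neutral, rule ballI)
      fix I assume I: "I \<in> {I. is_ideal f I}"
      show "SA (stdr f ({1..length f} - I)) u * (SA (stdr f I) v :: 'k) = 0"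
      proof (rule ccontr)
        assume "SA (stdr f ({1..length f} - I)) u * (SA (stdr f I) v :: 'k) \<noteq> 0"
        then have a: "(SA (PP f I) u :: 'k) \<noteq> 0" "(SA (QQ f I) v :: 'k) \<noteq> 0" by auto
        have "length u = length f - card I" using SA_len[OF a(1)] length_PP I by simp
        moreover have "length v = card I" using SA_len[OF a(2)] length_QQ I by simp
        moreover have "card I \<le> length f"
          using ideal_sub I by (metis card_atLeastAtMost card_mono diff_Suc_1 finite_atLeastAtMost mem_Collect_eq)
        ultimately show False using False by simp
      qed
    qed
    ultimately show ?thesis by simp
  next
    case True
    define H where "H I = (if is_ideal f I then G I else 0)" for I
    define T where "T = {I. I \<subseteq> NN f \<and> card I = length v}"
    have "(\<Sum>w\<in>?W. (SAB f w :: 'k)) = (\<Sum>w\<in>?W. H (?R w))"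
    proof (rule sum.cong[OF refl])
      fix w assume w: "w \<in> ?W"
      then have lw: "length w = length f" using Wp True by simp
      have d: "(SAB f w :: 'k) = (if is_ideal f (?R w)
     then SA (PP f (?R w)) (pl w) * SA (QQ f (?R w)) (pr w) else 0)" by (rule SAB_decomp[OF ef lw])
      then show "(SAB f w :: 'k) = H (?R w)" using Wp[OF w] by (simp add: H_def G_def)
    qed
    also have "\<dots> = (\<Sum>I\<in>?R ` ?W. H I)"
    proof (rule sum.reindex[symmetric, unfolded comp_def])
      show "inj_on ?R ?W"
      proof (rule inj_onI)
        fix w1 w2 assume w1: "w1 \<in> ?W" and w2: "w2 \<in> ?W" and e: "?R w1 = ?R w2"
        have l: "length w1 = ?N" "length w2 = ?N" using Wp w1 w2 by auto
        have eL: "pos isl w1 = pos isl w2" using e l by (simp add: pos_isl_compl)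
        show "w1 = w2"
        proof (rule nth_equalityI)
          show "length w1 = length w2" using l by simp
        next
          fix i assume i: "i < length w1"
          have i2: "i < length w2" using i l by simp
          have "isl (w1 ! i) \<longleftrightarrow> isl (w2 ! i)"
          proof -
            have "Suc i \<in> ?R w1 \<longleftrightarrow> \<not> isl (w1 ! i)" using i by (simp add: pos_def)
            moreover have "Suc i \<in> ?R w2 \<longleftrightarrow> \<not> isl (w2 ! i)" using i2 by (simp add: pos_def)
            ultimately show ?thesis using e by simp
          qed
          note ii = this
          note A1 = nth_via_proj[OF i] and A2 = nth_via_proj[OF i2]
          have pp: "pl w1 = pl w2" "pr w1 = pr w2" using Wp[OF w1] Wp[OF w2] by auto
          show "w1 ! i = w2 ! i"
          proof (cases "isl (w1 ! i)")
            case True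
            then have T2: "isl (w2 ! i)" using ii by simp
            have "w1 ! i = Inl (pl w1 ! (rank (pos isl w1) (Suc i) - 1))" using A1 unfolding if_P[OF True] .
            moreover have "w2 ! i = Inl (pl w2 ! (rank (pos isl w2) (Suc i) - 1))" using A2 unfolding if_P[OF T2] .
            ultimately show ?thesis using pp eL by simp
          next
            case False
            then have T2: "\<not> isl (w2 ! i)" using ii by simp
            have "w1 ! i = Inr (pr w1 ! (rank (?R w1) (Suc i) - 1))" using A1 unfolding if_not_P[OF False] .
            moreover have "w2 ! i = Inr (pr w2 ! (rank (?R w2) (Suc i) - 1))" using A2 unfolding if_not_P[OF T2] .
            ultimately show ?thesis using pp e by simp
          qed
        qed
      qed
    qed
    also have "?R ` ?W = T"
    proof
      show "?R ` ?W \<subseteq> T"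
      proof
        fix I assume "I \<in> ?R ` ?W"
        then obtain w where w: "w \<in> ?W" and I: "I = ?R w" by blast
        have "I \<subseteq> NN f" using pos_sub Wp[OF w] True I by metis
        moreover have "card I = length v"
        proof -
          have "length (pr w) = length v" using Wp[OF w] by simp
          moreover have "length (pr w) = card I" using card_pos[of "\<lambda>x. \<not> isl x" w] I by (simp add: pr_def)
          ultimately show ?thesis by simp
        qed
        ultimately show "I \<in> T" by (simp add: T_def)
      qed
    next
      show "T \<subseteq> ?R ` ?W"
      proof
        fix I assume I: "I \<in> T"
        have Is: "I \<subseteq> NN f" and cI: "card I = length v" using I by (auto simp: T_def)
        define bs where "bs = map (\<lambda>i. Suc i \<in> I) [0..<?n]"
        have lbs: "length bs = ?n" by (simp add: bs_def)
        have "length (filter id bs) = card {i. i < length bs \<and> id (bs ! i)}"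
          by (rule length_filter_conv_card)
        also have "{i. i < length bs \<and> id (bs ! i)} = {i. i < ?n \<and> Suc i \<in> I}"
          by (auto simp: bs_def)
        also have "card {i. i < ?n \<and> Suc i \<in> I} = card I"
        proof -
          have "I = Suc ` {i. i < ?n \<and> Suc i \<in> I}"
          proof
            show "I \<subseteq> Suc ` {i. i < ?n \<and> Suc i \<in> I}"
            proof
              fix x assume x: "x \<in> I"
              then have xr: "1 \<le> x" "x \<le> ?n" using Is by auto
              then have "x = Suc (x - 1)" "x - 1 < ?n" "Suc (x - 1) \<in> I" using x by auto
              then show "x \<in> Suc ` {i. i < ?n \<and> Suc i \<in> I}" by blast
            qed
          qed auto
          then show ?thesis by (metis card_image inj_Suc inj_on_subset subset_UNIV)
        qed
        finally have f1: "length (filter id bs) = length v" using cI by (rule trans)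
        have "length (filter id bs) + length (filter (\<lambda>x. \<not> id x) bs) = length bs"
          by (rule sum_length_filter_compl)
        then have f2: "length (filter Not bs) = length u" using f1 lbs True by simp
        define w where "w = mg bs u v"
        have mp: "pl w = u" "pr w = v" "map (\<lambda>x. \<not> isl x) w = bs"
          using mg_props[OF f1 f2] w_def by auto
        have wW: "w \<in> ?W" using shuffles_iff mp by blast
        have lw: "length w = ?n" using mp(3) lbs by (metis length_map)
        have "?R w = I"
        proof -
          have "?R w = {i\<in>{1..?n}. bs ! (i - 1)}"
          proof -
            have "\<And>i. i \<in> {1..?n} \<Longrightarrow> (\<not> isl (w ! (i - 1))) = bs ! (i - 1)"
              using mp(3) lw by (metis One_nat_def Suc_le_eq Suc_pred atLeastAtMost_iff le_zero_eq nat.simps(3) nth_map not_less_eq_eq)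
            then show ?thesis unfolding pos_def lw by auto
          qed
          also have "\<dots> = I"
          proof -
            have "\<And>i. i \<in> {1..?n} \<Longrightarrow> bs ! (i - 1) = (i \<in> I)" by (auto simp: bs_def)
            then show ?thesis using Is by auto
          qed
          finally show ?thesis .
        qed
        then show "I \<in> ?R ` ?W" using wW by blast
      qed
    qed
    also have "(\<Sum>I\<in>T. H I) = (\<Sum>I\<in>{I\<in>T. is_ideal f I}. G I)"
    proof -
      have "finite T" unfolding T_def by (rule finite_subset[of _ "Pow (NN f)"]) auto
      then show ?thesis unfolding H_def by (rule sum.inter_filter[symmetric])
    qed
    also have "\<dots> = (\<Sum>I\<in>{I. is_ideal f I}. G I)"
    proof (rule sum.mono_neutral_left[OF finite_Id])
      show "{I\<in>T. is_ideal f I} \<subseteq> {I. is_ideal f I}" by auto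
      show "\<forall>I\<in>{I. is_ideal f I} - {I\<in>T. is_ideal f I}. G I = 0"
      proof
        fix I assume I: "I \<in> {I. is_ideal f I} - {I\<in>T. is_ideal f I}"
        then have "card I \<noteq> length v" using ideal_sub by (auto simp: T_def)
        then have "length (QQ f I) \<noteq> length v" using length_QQ I by auto
        then have "(SA (QQ f I) v :: 'k) = 0" using SA_len by metis
        then show "G I = 0" by (simp add: G_def)
      qed
    qed
    finally show ?thesis by (simp add: G_def)
  qed
qed


theorem mainTheorem12:
  shows "(\<forall>(F :: nat list set) (c :: nat list \<Rightarrow> 'k::field). finite F \<longrightarrow> (\<forall>f\<in>F. is_endo f) \<longrightarrow>
            (\<forall>w. (\<Sum>f\<in>F. c f * SA f w) = 0) \<longrightarrow> (\<forall>f\<in>F. c f = 0))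
    \<and> (\<forall>f g. is_endo f \<longrightarrow> is_endo g \<longrightarrow>
            series_mult (SA f) (SA g) = (SA (shcat f g) :: letter list \<Rightarrow> 'k))
    \<and> (SA [] :: letter list \<Rightarrow> 'k) = series_one
    \<and> (\<forall>F G. F \<in> (EFSym :: (letter list \<Rightarrow> 'k) set) \<longrightarrow> G \<in> EFSym \<longrightarrow> series_mult F G \<in> EFSym)
    \<and> (series_one :: letter list \<Rightarrow> 'k) \<in> EFSym
    \<and> (\<forall>f u v. is_endo f \<longrightarrow>
            (\<Sum>w\<in>shuffles (map Inl u) (map Inr v). (SAB f w :: 'k)) =
            (\<Sum>I\<in>{I. is_ideal f I}. SA (stdr f ({1..length f} - I)) u * SA (stdr f I) v))
    \<and> (\<exists>(eps :: endo \<Rightarrow> 'k) S. hopf_sc efmu efone efDelta eps S \<and>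
            graded_sc efdeg efmu efone efDelta eps)
    \<and> (\<exists>x. (efDelta x :: endo \<times> endo \<Rightarrow> 'k) \<noteq> (\<lambda>(a, b). efDelta x (b, a)))"
proof (intro conjI)
  show "\<forall>(F :: nat list set) (c :: nat list \<Rightarrow> 'k::field). finite F \<longrightarrow> (\<forall>f\<in>F. is_endo f) \<longrightarrow>
            (\<forall>w. (\<Sum>f\<in>F. c f * SA f w) = 0) \<longrightarrow> (\<forall>f\<in>F. c f = 0)"
    using lin_indep by blast
  show "\<forall>f g. is_endo f \<longrightarrow> is_endo g \<longrightarrow>
            series_mult (SA f) (SA g) = (SA (shcat f g) :: letter list \<Rightarrow> 'k)"
    by (intro allI impI) (rule series_mult_SA)
  show "(SA [] :: letter list \<Rightarrow> 'k) = series_one" by (rule SA_Nil)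
  show "\<forall>F G. F \<in> (EFSym :: (letter list \<Rightarrow> 'k) set) \<longrightarrow> G \<in> EFSym \<longrightarrow> series_mult F G \<in> EFSym"
    by (intro allI impI) (rule EFSym_mult)
  show "(series_one :: letter list \<Rightarrow> 'k) \<in> EFSym" by (rule series_one_EFSym)
  show "\<forall>f u v. is_endo f \<longrightarrow>
            (\<Sum>w\<in>shuffles (map Inl u) (map Inr v). (SAB f w :: 'k)) =
            (\<Sum>I\<in>{I. is_ideal f I}. SA (stdr f ({1..length f} - I)) u * SA (stdr f I) v)"
    by (intro allI impI) (rule shuffle_formula)
  show "\<exists>(eps :: endo \<Rightarrow> 'k) S. hopf_sc efmu efone efDelta eps S \<and>
            graded_sc efdeg efmu efone efDelta eps"
    using hopf_main graded by blast
  show "\<exists>x. (efDelta x :: endo \<times> endo \<Rightarrow> 'k) \<noteq> (\<lambda>(a, b). efDelta x (b, a))"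
    by (rule noncocomm)
qed


end
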